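(* Let $k$ be an algebraically closed field of characteristic $0$, let $A=k\langle x_1,\dots,x_n\rangle/(f_1,\dots,f_h)$ be a noetherian connected graded algebra, let $r\ge1$, $\xi$ a primitive $r$-th root of unity, integers $0<a_j\le r$, and let $G$ be the cyclic group of order $r$ generated by $g=\mathrm{diag}(\xi^{a_1},\dots,\xi^{a_n})$, acting on $A$ (and on $k\langle x_1,\dots,x_n\rangle$) by $g\cdot x_j=\xi^{a_j}x_j$. Then $A*G\cong kQ_G/I$, where $I$ is the two-sided ideal generated by the elements $\phi(f_j*\rho_i)$ for $1\le j\le h$ and $i\in\mathbb{Z}/r\mathbb{Z}$.
   Context: $\rho_i=\frac1r\sum_{p=0}^{r-1}\xi^{ip}g^p\in kG$. The McKay quiver $Q_G$ has vertices $\mathbb{Z}/r\mathbb{Z}$ and arrows $x_{j,i}:i-a_j\to i$ ($i\in\mathbb{Z}/r\mathbb{Z}$, $1\le j\le n$); paths in $kQ_G$ are multiplied by concatenation written left to right, and $e_i$ is the trivial path at $i$. $\phi:k\langle x_1,\dots,x_n\rangle*G\to kQ_G$ is the linear map with $\phi(1*\rho_i)=e_i$ and $\phi(x_{s_1}\cdots x_{s_m}*\rho_i)=x_{s_1,\,i-a_{s_m}-\cdots-a_{s_2}}\cdots x_{s_{m-1},\,i-a_{s_m}}x_{s_m,\,i}$ (it is an algebra isomorphism). The skew group algebra $R*G=R\otimes_kkG$ has multiplication $(a*h)(b*h')=ah(b)*hh'$. *)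

theory Defs
  imports "HOL-Algebra.QuotRing" "HOL-Computational_Algebra.Polynomial"
begin

text \<open>Elements: finitely supported functions from words (lists over the letters 1..n)
  to k; the word [s1,...,sm] stands for the monomial x_s1 ... x_sm.\<close>

definition free_alg :: "nat \<Rightarrow> (nat list \<Rightarrow> 'k::field) ring" where
  "free_alg n = \<lparr> carrier = {F. finite {w. F w \<noteq> 0} \<and> (\<forall>w. F w \<noteq> 0 \<longrightarrow> set w \<subseteq> {1..n})},
      monoid.mult = (\<lambda>F G w. \<Sum>(u,v) \<in> {(u,v). F u \<noteq> 0 \<and> G v \<noteq> 0 \<and> u @ v = w}. F u * G v),
      one = (\<lambda>w. if w = [] then 1 else 0),
      zero = (\<lambda>w. 0),
      add = (\<lambda>F G w. F w + G w) \<rparr>"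

definition free_scalar :: "'k::field \<Rightarrow> nat list \<Rightarrow> 'k" where
  "free_scalar c = (\<lambda>w. if w = [] then c else 0)"

definition wdeg :: "(nat \<Rightarrow> nat) \<Rightarrow> nat list \<Rightarrow> nat" where
  "wdeg a w = (\<Sum>s\<leftarrow>w. a s)"

definition gact :: "'k::field \<Rightarrow> (nat \<Rightarrow> nat) \<Rightarrow> (nat list \<Rightarrow> 'k) \<Rightarrow> (nat list \<Rightarrow> 'k)" where
  "gact \<xi> a F = (\<lambda>w. \<xi> ^ wdeg a w * F w)"

definition homogeneous_pos :: "(nat list \<Rightarrow> 'k::field) \<Rightarrow> bool" where
  "homogeneous_pos F \<longleftrightarrow> (\<exists>d>0. \<forall>w. F w \<noteq> 0 \<longrightarrow> length w = d)"

definition rel_ideal :: "nat \<Rightarrow> (nat \<Rightarrow> nat list \<Rightarrow> 'k::field) \<Rightarrow> nat \<Rightarrow> (nat list \<Rightarrow> 'k) set" where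
  "rel_ideal n f h = genideal (free_alg n) (f ` {1..h})"

definition left_ideal :: "'a set \<Rightarrow> ('a, 'b) ring_scheme \<Rightarrow> bool" where
  "left_ideal I R \<longleftrightarrow> additive_subgroup I R \<and> (\<forall>a\<in>carrier R. \<forall>x\<in>I. a \<otimes>\<^bsub>R\<^esub> x \<in> I)"

definition right_ideal :: "'a set \<Rightarrow> ('a, 'b) ring_scheme \<Rightarrow> bool" where
  "right_ideal I R \<longleftrightarrow> additive_subgroup I R \<and> (\<forall>a\<in>carrier R. \<forall>x\<in>I. x \<otimes>\<^bsub>R\<^esub> a \<in> I)"

definition noetherian_nc :: "('a, 'b) ring_scheme \<Rightarrow> bool" where
  "noetherian_nc R \<longleftrightarrow>
     (\<forall>I :: nat \<Rightarrow> 'a set. (\<forall>m. left_ideal (I m) R \<and> I m \<subseteq> I (Suc m)) \<longrightarrow> (\<exists>N. \<forall>m\<ge>N. I m = I N)) \<and>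
     (\<forall>I :: nat \<Rightarrow> 'a set. (\<forall>m. right_ideal (I m) R \<and> I m \<subseteq> I (Suc m)) \<longrightarrow> (\<exists>N. \<forall>m\<ge>N. I m = I N))"

text \<open>An element F represents sum_{p<r} F p * g^p (F p in A); multiplication
  (a*g^q)(b*g^s) = a g^q(b) * g^(q+s).\<close>
definition skew_alg :: "('a, 'b) ring_scheme \<Rightarrow> ('a \<Rightarrow> 'a) \<Rightarrow> nat \<Rightarrow> (nat \<Rightarrow> 'a) ring" where
  "skew_alg A \<sigma> r = \<lparr> carrier = {F. (\<forall>p<r. F p \<in> carrier A) \<and> (\<forall>p\<ge>r. F p = \<zero>\<^bsub>A\<^esub>)},
      monoid.mult = (\<lambda>F G p. if p < r then
          finsum A (\<lambda>(q,s). F q \<otimes>\<^bsub>A\<^esub> (\<sigma> ^^ q) (G s)) {(q,s). q < r \<and> s < r \<and> (q + s) mod r = p}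
        else \<zero>\<^bsub>A\<^esub>),
      one = (\<lambda>p. if p = 0 then \<one>\<^bsub>A\<^esub> else \<zero>\<^bsub>A\<^esub>),
      zero = (\<lambda>p. \<zero>\<^bsub>A\<^esub>),
      add = (\<lambda>F G p. if p < r then F p \<oplus>\<^bsub>A\<^esub> G p else \<zero>\<^bsub>A\<^esub>) \<rparr>"

text \<open>Vertices: 0..r-1 (= Z/rZ). Arrow x_{j,i} (written (j,i)) goes from i - a_j to i.\<close>
definition arr_src :: "nat \<Rightarrow> (nat \<Rightarrow> nat) \<Rightarrow> nat \<times> nat \<Rightarrow> nat" where
  "arr_src r a e = nat ((int (snd e) - int (a (fst e))) mod int r)"

definition arr_tgt :: "nat \<times> nat \<Rightarrow> nat" where
  "arr_tgt e = snd e"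

definition valid_arrow :: "nat \<Rightarrow> nat \<Rightarrow> nat \<times> nat \<Rightarrow> bool" where
  "valid_arrow n r e \<longleftrightarrow> fst e \<in> {1..n} \<and> snd e < r"

datatype qpath = Triv nat | Arrs "(nat \<times> nat) list"

fun path_src :: "nat \<Rightarrow> (nat \<Rightarrow> nat) \<Rightarrow> qpath \<Rightarrow> nat" where
  "path_src r a (Triv i) = i"
| "path_src r a (Arrs es) = arr_src r a (hd es)"

fun path_tgt :: "qpath \<Rightarrow> nat" where
  "path_tgt (Triv i) = i"
| "path_tgt (Arrs es) = arr_tgt (last es)"

fun valid_path :: "nat \<Rightarrow> nat \<Rightarrow> (nat \<Rightarrow> nat) \<Rightarrow> qpath \<Rightarrow> bool" where
  "valid_path n r a (Triv i) \<longleftrightarrow> i < r"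
| "valid_path n r a (Arrs es) \<longleftrightarrow> es \<noteq> [] \<and> (\<forall>e\<in>set es. valid_arrow n r e) \<and>
      (\<forall>k. Suc k < length es \<longrightarrow> arr_tgt (es ! k) = arr_src r a (es ! Suc k))"

text \<open>Product of two paths (concatenation, left to right); None means the product is 0.\<close>
fun path_cat :: "qpath \<Rightarrow> qpath \<Rightarrow> qpath" where
  "path_cat (Triv i) q = q"
| "path_cat (Arrs es) (Triv j) = Arrs es"
| "path_cat (Arrs es) (Arrs fs) = Arrs (es @ fs)"

definition path_mult :: "nat \<Rightarrow> (nat \<Rightarrow> nat) \<Rightarrow> qpath \<Rightarrow> qpath \<Rightarrow> qpath option" where
  "path_mult r a p q = (if path_tgt p = path_src r a q then Some (path_cat p q) else None)"

definition path_alg :: "nat \<Rightarrow> nat \<Rightarrow> (nat \<Rightarrow> nat) \<Rightarrow> (qpath \<Rightarrow> 'k::field) ring" where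
  "path_alg n r a = \<lparr> carrier = {F. finite {p. F p \<noteq> 0} \<and> (\<forall>p. F p \<noteq> 0 \<longrightarrow> valid_path n r a p)},
      monoid.mult = (\<lambda>F G p. \<Sum>(q1,q2) \<in> {(q1,q2). F q1 \<noteq> 0 \<and> G q2 \<noteq> 0 \<and> path_mult r a q1 q2 = Some p}.
                                F q1 * G q2),
      one = (\<lambda>p. case p of Triv i \<Rightarrow> (if i < r then 1 else 0) | Arrs _ \<Rightarrow> 0),
      zero = (\<lambda>p. 0),
      add = (\<lambda>F G p. F p + G p) \<rparr>"

definition path_scalar :: "nat \<Rightarrow> 'k::field \<Rightarrow> qpath \<Rightarrow> 'k" where
  "path_scalar r c = (\<lambda>p. case p of Triv i \<Rightarrow> (if i < r then c else 0) | Arrs _ \<Rightarrow> 0)"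

text \<open>phi(x_s1 ... x_sm * rho_i) = x_{s1, i - a_sm - ... - a_s2} ... x_{s(m-1), i - a_sm} x_{sm, i},
  phi(1 * rho_i) = e_i.\<close>
definition word_path :: "nat \<Rightarrow> (nat \<Rightarrow> nat) \<Rightarrow> nat list \<Rightarrow> nat \<Rightarrow> qpath" where
  "word_path r a w i = (if w = [] then Triv i else
     Arrs (map (\<lambda>k. (w ! k, nat ((int i - int (\<Sum>l\<in>{k<..<length w}. a (w ! l))) mod int r)))
               [0..<length w]))"

definition phi_elem :: "nat \<Rightarrow> (nat \<Rightarrow> nat) \<Rightarrow> (nat list \<Rightarrow> 'k::field) \<Rightarrow> nat \<Rightarrow> qpath \<Rightarrow> 'k" where
  "phi_elem r a F i = (\<lambda>p. \<Sum>w \<in> {w. F w \<noteq> 0 \<and> word_path r a w i = p}. F w)"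

definition quiver_ideal :: "nat \<Rightarrow> nat \<Rightarrow> (nat \<Rightarrow> nat) \<Rightarrow> (nat \<Rightarrow> nat list \<Rightarrow> 'k::field) \<Rightarrow> nat \<Rightarrow> (qpath \<Rightarrow> 'k) set" where
  "quiver_ideal n r a f h = genideal (path_alg n r a) {phi_elem r a (f j) i | j i. j \<in> {1..h} \<and> i < r}"

end

theory Submission
  imports Defs "HOL-Library.Function_Algebras"
begin

definition splits :: "'a list \<Rightarrow> ('a list \<times> 'a list) set" where
  "splits w = {(u,v). u @ v = w}"

lemma splits_eq: "splits w = (\<lambda>k. (take k w, drop k w)) ` {..length w}"
proof -
  have "\<exists>k\<le>length w. u = take k w \<and> v = drop k w" if "u @ v = w" for u v
    using that by (intro exI[of _ "length u"]) auto
  then show ?thesis unfolding splits_def by (auto simp: image_def)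
qed

lemma finite_splits[simp]: "finite (splits w)"
  by (simp add: splits_eq)

lemma splits_mem[simp]: "(x \<in> splits w) = (fst x @ snd x = w)"
  by (cases x) (simp add: splits_def)

definition conv :: "('a list \<Rightarrow> 'c \<Rightarrow> 'c) \<Rightarrow> ('a list \<Rightarrow> 'c::ring) \<Rightarrow> ('a list \<Rightarrow> 'c) \<Rightarrow> 'a list \<Rightarrow> 'c"
  where "conv \<tau> F G w = (\<Sum>(u,v)\<in>splits w. \<tau> v (F u) * G v)"

definition calg :: "('a list \<Rightarrow> 'c \<Rightarrow> 'c) \<Rightarrow> 'a list set \<Rightarrow> 'c set \<Rightarrow> 'c \<Rightarrow> ('a list \<Rightarrow> 'c::ring) ring" where
  "calg \<tau> S C e = \<lparr> carrier = {F. finite {w. F w \<noteq> 0} \<and> (\<forall>w. F w \<noteq> 0 \<longrightarrow> w \<in> S) \<and> (\<forall>w. F w \<in> C)},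
     monoid.mult = conv \<tau>, one = (\<lambda>w. if w = [] then e else 0), zero = (\<lambda>w. 0),
     add = (\<lambda>F G w. F w + G w) \<rparr>"

lemma sum_splits_Nil_left:
  "(\<Sum>(u,v)\<in>splits w. (if u = [] then f v else 0)) = f w"
proof -
  have "(\<Sum>(u,v)\<in>splits w. (if u = [] then f v else 0)) = (\<Sum>x\<in>splits w. (if x = ([],w) then f w else 0))"
  proof (intro sum.cong refl)
    fix x assume "x \<in> splits w" then show "(case x of (u,v) \<Rightarrow> if u = [] then f v else 0) = (if x = ([],w) then f w else 0)"
      by (cases x) auto
  qed
  also have "\<dots> = f w" by (subst sum.delta) auto
  finally show ?thesis .
qed

lemma sum_splits_Nil_right:
  "(\<Sum>(u,v)\<in>splits w. (if v = [] then f u else 0)) = f w"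
proof -
  have "(\<Sum>(u,v)\<in>splits w. (if v = [] then f u else 0)) = (\<Sum>x\<in>splits w. (if x = (w,[]) then f w else 0))"
  proof (intro sum.cong refl)
    fix x assume "x \<in> splits w" then show "(case x of (u,v) \<Rightarrow> if v = [] then f u else 0) = (if x = (w,[]) then f w else 0)"
      by (cases x) auto
  qed
  also have "\<dots> = f w" by (subst sum.delta) auto
  finally show ?thesis .
qed

locale conv_setting =
  fixes \<tau> :: "'a list \<Rightarrow> 'c::ring \<Rightarrow> 'c" and S :: "'a list set" and C :: "'c set" and e :: 'c
  assumes tau_add: "\<tau> v (x + y) = \<tau> v x + \<tau> v y"
    and tau_mult: "\<tau> v (x * y) = \<tau> v x * \<tau> v y"
    and tau_Nil: "x \<in> C \<Longrightarrow> \<tau> [] x = x"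
    and tau_app: "\<tau> (u @ v) x = \<tau> v (\<tau> u x)"
    and tau_C: "x \<in> C \<Longrightarrow> \<tau> v x \<in> C"
    and tau_e: "\<tau> v e = e"
    and C_add: "x \<in> C \<Longrightarrow> y \<in> C \<Longrightarrow> x + y \<in> C"
    and C_uminus: "x \<in> C \<Longrightarrow> - x \<in> C"
    and C_mult: "x \<in> C \<Longrightarrow> y \<in> C \<Longrightarrow> x * y \<in> C"
    and C_zero: "0 \<in> C" and e_C: "e \<in> C"
    and e_left: "x \<in> C \<Longrightarrow> e * x = x" and e_right: "x \<in> C \<Longrightarrow> x * e = x"
    and S_Nil: "[] \<in> S" and S_app: "u @ v \<in> S \<longleftrightarrow> u \<in> S \<and> v \<in> S"
begin

lemma tau_zero[simp]: "\<tau> v 0 = 0"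
  using tau_add[of v 0 0] by simp

lemma tau_sum: "\<tau> v (sum f A) = (\<Sum>x\<in>A. \<tau> v (f x))"
  by (induction A rule: infinite_finite_induct) (auto simp: tau_add)

lemma C_sum: "(\<And>x. x \<in> A \<Longrightarrow> f x \<in> C) \<Longrightarrow> sum f A \<in> C"
  by (induction A rule: infinite_finite_induct) (auto simp: C_zero C_add)

lemma conv_inner: "\<tau> v (F x) * (\<Sum>(y,z)\<in>splits v. \<tau> z (G y) * H z) = (\<Sum>(y,z)\<in>splits v. \<tau> z (\<tau> y (F x)) * \<tau> z (G y) * H z)"
  unfolding sum_distrib_left by (rule sum.cong) (auto simp: tau_app mult.assoc)

lemma conv_assoc: "conv \<tau> (conv \<tau> F G) H = conv \<tau> F (conv \<tau> G H)"
proof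
  fix w :: "'a list"
  let ?T = "{(x,y,z). x @ y @ z = w}"
  let ?g = "\<lambda>(x,y,z). \<tau> z (\<tau> y (F x)) * \<tau> z (G y) * H z"
  have "conv \<tau> (conv \<tau> F G) H w
      = (\<Sum>(u,z)\<in>splits w. \<Sum>(x,y)\<in>splits u. \<tau> z (\<tau> y (F x)) * \<tau> z (G y) * H z)"
    unfolding conv_def
    by (intro sum.cong refl) (auto simp: tau_sum tau_mult sum_distrib_right case_prod_beta)
  also have "\<dots> = (\<Sum>((u,z),(x,y))\<in>Sigma (splits w) (\<lambda>(u,z). splits u). \<tau> z (\<tau> y (F x)) * \<tau> z (G y) * H z)"
    by (subst sum.Sigma[symmetric]) (auto simp: case_prod_beta)
  also have "\<dots> = sum ?g ?T"
    apply (rule sum.reindex_bij_witness[where i = "\<lambda>(x,y,z). ((x@y,z),(x,y))" and j = "\<lambda>((u,z),(x,y)). (x,y,z)"])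
    apply (auto simp: splits_def)
    done
  finally have L: "conv \<tau> (conv \<tau> F G) H w = sum ?g ?T" .
  have "conv \<tau> F (conv \<tau> G H) w
      = (\<Sum>(x,v)\<in>splits w. \<Sum>(y,z)\<in>splits v. \<tau> z (\<tau> y (F x)) * \<tau> z (G y) * H z)"
    unfolding conv_def by (intro sum.cong refl) (auto simp: conv_inner)
  also have "\<dots> = (\<Sum>((x,v),(y,z))\<in>Sigma (splits w) (\<lambda>(x,v). splits v). \<tau> z (\<tau> y (F x)) * \<tau> z (G y) * H z)"
    by (subst sum.Sigma[symmetric]) (auto simp: case_prod_beta)
  also have "\<dots> = sum ?g ?T"
    apply (rule sum.reindex_bij_witness[where i = "\<lambda>(x,y,z). ((x,y@z),(y,z))" and j = "\<lambda>((x,v),(y,z)). (x,y,z)"])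
    apply (auto simp: splits_def)
    done
  finally show "conv \<tau> (conv \<tau> F G) H w = conv \<tau> F (conv \<tau> G H) w" using L by simp
qed

lemma conv_one_left: "(\<And>w. F w \<in> C) \<Longrightarrow> conv \<tau> (\<lambda>w. if w = [] then e else 0) F = F"
proof
  fix w assume "\<And>w. F w \<in> C"
  have "conv \<tau> (\<lambda>w. if w = [] then e else 0) F w = (\<Sum>(u,v)\<in>splits w. (if u = [] then F v else 0))"
    unfolding conv_def by (intro sum.cong refl) (auto simp: tau_e e_left \<open>\<And>w. F w \<in> C\<close>)
  then show "conv \<tau> (\<lambda>w. if w = [] then e else 0) F w = F w" by (simp add: sum_splits_Nil_left)
qed

lemma conv_one_right: "(\<And>w. F w \<in> C) \<Longrightarrow> conv \<tau> F (\<lambda>w. if w = [] then e else 0) = F"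
proof
  fix w assume "\<And>w. F w \<in> C"
  have "conv \<tau> F (\<lambda>w. if w = [] then e else 0) w = (\<Sum>(u,v)\<in>splits w. (if v = [] then F u else 0))"
    unfolding conv_def by (intro sum.cong refl) (auto simp: tau_Nil e_right \<open>\<And>w. F w \<in> C\<close>)
  then show "conv \<tau> F (\<lambda>w. if w = [] then e else 0) w = F w" by (simp add: sum_splits_Nil_right)
qed

lemma conv_ldistr: "conv \<tau> (\<lambda>w. F w + G w) H = (\<lambda>w. conv \<tau> F H w + conv \<tau> G H w)"
  unfolding conv_def by (auto simp: tau_add distrib_right sum.distrib case_prod_beta)

lemma conv_rdistr: "conv \<tau> H (\<lambda>w. F w + G w) = (\<lambda>w. conv \<tau> H F w + conv \<tau> H G w)"
  unfolding conv_def by (auto simp: distrib_left sum.distrib case_prod_beta)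

lemma conv_closed:
  assumes F: "F \<in> carrier (calg \<tau> S C e)" and G: "G \<in> carrier (calg \<tau> S C e)"
  shows "conv \<tau> F G \<in> carrier (calg \<tau> S C e)"
proof -
  have fF: "finite {w. F w \<noteq> 0}" and fG: "finite {w. G w \<noteq> 0}"
    and SF: "\<And>w. F w \<noteq> 0 \<Longrightarrow> w \<in> S" and SG: "\<And>w. G w \<noteq> 0 \<Longrightarrow> w \<in> S"
    and CF: "\<And>w. F w \<in> C" and CG: "\<And>w. G w \<in> C"
    using F G by (auto simp: calg_def)
  have nz: "\<exists>u v. u @ v = w \<and> F u \<noteq> 0 \<and> G v \<noteq> 0" if "conv \<tau> F G w \<noteq> 0" for w
  proof (rule ccontr)
    assume A: "\<not> (\<exists>u v. u @ v = w \<and> F u \<noteq> 0 \<and> G v \<noteq> 0)"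
    have "\<forall>x\<in>splits w. (case x of (u,v) \<Rightarrow> \<tau> v (F u) * G v) = 0"
    proof
      fix x assume "x \<in> splits w"
      then obtain u v where x: "x = (u,v)" "u @ v = w" by (cases x) auto
      then have "F u = 0 \<or> G v = 0" using A by blast
      then show "(case x of (u,v) \<Rightarrow> \<tau> v (F u) * G v) = 0" using x by auto
    qed
    then have "conv \<tau> F G w = 0" unfolding conv_def by (intro sum.neutral) auto
    then show False using that by simp
  qed
  have "{w. conv \<tau> F G w \<noteq> 0} \<subseteq> (\<lambda>(u,v). u @ v) ` ({w. F w \<noteq> 0} \<times> {w. G w \<noteq> 0})"
  proof
    fix w assume "w \<in> {w. conv \<tau> F G w \<noteq> 0}"
    then obtain u v where "u @ v = w" "F u \<noteq> 0" "G v \<noteq> 0" using nz by blast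
    then show "w \<in> (\<lambda>(u,v). u @ v) ` ({w. F w \<noteq> 0} \<times> {w. G w \<noteq> 0})"
      by (intro image_eqI[of _ _ "(u,v)"]) auto
  qed
  moreover have "finite ((\<lambda>(u,v). u @ v) ` ({w. F w \<noteq> 0} \<times> {w. G w \<noteq> 0}))"
    using fF fG by simp
  ultimately have fin: "finite {w. conv \<tau> F G w \<noteq> 0}"
    by (rule finite_subset)
  have inS: "w \<in> S" if nzw: "conv \<tau> F G w \<noteq> 0" for w
  proof -
    obtain u v where uv: "u @ v = w" "F u \<noteq> 0" "G v \<noteq> 0" using nz[OF nzw] by blast
    then have "u \<in> S" "v \<in> S" using SF SG by auto
    then have "u @ v \<in> S" by (simp add: S_app)
    then show ?thesis using uv(1) by simp
  qed
  have inC: "conv \<tau> F G w \<in> C" for w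
    unfolding conv_def by (intro C_sum) (simp add: case_prod_beta C_mult tau_C CF CG)
  show ?thesis unfolding calg_def using fin inS inC by simp
qed

lemma add_closed:
  assumes "x \<in> carrier (calg \<tau> S C e)" "y \<in> carrier (calg \<tau> S C e)"
  shows "(\<lambda>w. x w + y w) \<in> carrier (calg \<tau> S C e)"
proof -
  have fx: "finite {w. x w \<noteq> 0}" and fy: "finite {w. y w \<noteq> 0}"
    and Sx: "\<And>w. x w \<noteq> 0 \<Longrightarrow> w \<in> S" and Sy: "\<And>w. y w \<noteq> 0 \<Longrightarrow> w \<in> S"
    and Cx: "\<And>w. x w \<in> C" and Cy: "\<And>w. y w \<in> C"
    using assms by (auto simp: calg_def)
  have sub: "{w. x w + y w \<noteq> 0} \<subseteq> {w. x w \<noteq> 0} \<union> {w. y w \<noteq> 0}" by auto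
  have "finite {w. x w + y w \<noteq> 0}" by (rule finite_subset[OF sub]) (use fx fy in simp)
  moreover have "w \<in> S" if "x w + y w \<noteq> 0" for w
  proof (cases "x w = 0")
    case True then have "y w \<noteq> 0" using that by simp
    then show ?thesis by (rule Sy)
  next
    case False then show ?thesis by (rule Sx)
  qed
  moreover have "x w + y w \<in> C" for w by (intro C_add Cx Cy)
  ultimately show ?thesis unfolding calg_def by simp
qed

lemma neg_closed:
  assumes "x \<in> carrier (calg \<tau> S C e)"
  shows "(\<lambda>w. - x w) \<in> carrier (calg \<tau> S C e)"
  using assms by (simp add: calg_def C_uminus)

lemma one_closed: "(\<lambda>w. if w = [] then e else 0) \<in> carrier (calg \<tau> S C e)"
proof -
  have sub: "{w. (if w = [] then e else 0) \<noteq> 0} \<subseteq> {[]}" by auto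
  have "finite {w. (if w = [] then e else 0) \<noteq> 0}" by (rule finite_subset[OF sub]) simp
  then show ?thesis unfolding calg_def by (simp add: S_Nil e_C C_zero)
qed

lemma calg_ring: "ring (calg \<tau> S C e)"
  apply (rule ringI)
     apply (rule abelian_groupI)
  subgoal for x y using add_closed[of x y] by (simp add: calg_def)
  subgoal by (simp add: calg_def C_zero)
  subgoal by (simp add: calg_def add.assoc)
  subgoal by (simp add: calg_def add.commute)
  subgoal by (simp add: calg_def)
  subgoal for x
    apply (rule bexI[of _ "\<lambda>w. - x w"])
     apply (simp add: calg_def)
    using neg_closed[of x] by simp
    apply (rule monoidI)
  subgoal for x y using conv_closed[of x y] by (simp add: calg_def)
  subgoal using one_closed by (simp add: calg_def)
  subgoal by (simp add: calg_def conv_assoc)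
  subgoal for x by (simp add: calg_def conv_one_left)
  subgoal for x by (simp add: calg_def conv_one_right)
  subgoal by (simp add: calg_def conv_ldistr)
  subgoal by (simp add: calg_def conv_rdistr)
  done

end

lemma wdeg_Nil[simp]: "wdeg a [] = 0" by (simp add: wdeg_def)
lemma wdeg_Cons[simp]: "wdeg a (s # w) = a s + wdeg a w" by (simp add: wdeg_def)
lemma wdeg_append[simp]: "wdeg a (u @ v) = wdeg a u + wdeg a v" by (simp add: wdeg_def)

lemma wdeg_nth: "wdeg a w = (\<Sum>l<length w. a (w ! l))"
  unfolding wdeg_def by (simp add: sum_list_sum_nth atLeast0LessThan)

lemma setting_R: "conv_setting (\<lambda>v x. x) {w. set w \<subseteq> {1..n}} UNIV (1::'k::field)"
  by unfold_locales auto

lemma free_mult_conv: "monoid.mult (free_alg n) = (conv (\<lambda>v x. x) :: _ \<Rightarrow> _ \<Rightarrow> _ \<Rightarrow> 'k::field)"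
proof (intro ext)
  fix F G :: "nat list \<Rightarrow> 'k" and w
  have "(\<Sum>(u,v) \<in> {(u,v). F u \<noteq> 0 \<and> G v \<noteq> 0 \<and> u @ v = w}. F u * G v) = (\<Sum>(u,v)\<in>splits w. F u * G v)"
    by (rule sum.mono_neutral_left) (use finite_splits[of w] in \<open>auto simp: splits_def\<close>)
  then show "(F \<otimes>\<^bsub>free_alg n\<^esub> G) w = conv (\<lambda>v x. x) F G w"
    by (simp add: free_alg_def conv_def)
qed

lemma free_alg_calg: "free_alg n = calg (\<lambda>v x. x) {w. set w \<subseteq> {1..n}} UNIV (1::'k::field)"
proof -
  have "free_alg n = \<lparr>carrier = carrier (free_alg n), monoid.mult = monoid.mult (free_alg n),
      one = one (free_alg n), zero = zero (free_alg n), add = add (free_alg n)\<rparr>"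
    by (simp add: free_alg_def)
  also have "\<dots> = calg (\<lambda>v x. x) {w. set w \<subseteq> {1..n}} UNIV (1::'k::field)"
    unfolding free_mult_conv by (simp add: free_alg_def calg_def)
  finally show ?thesis .
qed

lemma ring_R: "ring (free_alg n :: (nat list \<Rightarrow> 'k::field) ring)"
  unfolding free_alg_calg by (rule conv_setting.calg_ring[OF setting_R])

fun wp_arrs :: "nat \<Rightarrow> (nat \<Rightarrow> nat) \<Rightarrow> nat list \<Rightarrow> nat \<Rightarrow> (nat \<times> nat) list" where
  "wp_arrs r a [] i = []"
| "wp_arrs r a (s # w) i = (s, nat ((int i - int (wdeg a w)) mod int r)) # wp_arrs r a w i"

lemma sum_shift_gl: "(\<Sum>l\<in>{Suc k<..<Suc n}. f l) = (\<Sum>l\<in>{k<..<n}. f (Suc l))"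
  by (rule sum.reindex_bij_witness[where i=Suc and j="\<lambda>l. l - 1"]) auto

lemma sum_shift_0: "(\<Sum>l\<in>{0<..<Suc n}. f l) = (\<Sum>l<n. f (Suc l))"
  by (rule sum.reindex_bij_witness[where i=Suc and j="\<lambda>l. l - 1"]) auto

lemma wp_arrs_map:
  "map (\<lambda>k. (w ! k, nat ((int i - int (\<Sum>l\<in>{k<..<length w}. a (w ! l))) mod int r))) [0..<length w]
   = wp_arrs r a w i"
proof (induction w)
  case Nil then show ?case by simp
next
  case (Cons s w)
  have "[0..<length (s # w)] = 0 # map Suc [0..<length w]"
    using upt_conv_Cons[of 0 "Suc (length w)"] map_Suc_upt[of 0 "length w"] by simp
  then have "map (\<lambda>k. ((s # w) ! k, nat ((int i - int (\<Sum>l\<in>{k<..<length (s # w)}. a ((s # w) ! l))) mod int r))) [0..<length (s # w)]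
      = (s, nat ((int i - int (\<Sum>l\<in>{0<..<Suc (length w)}. a ((s # w) ! l))) mod int r)) #
        map (\<lambda>k. (w ! k, nat ((int i - int (\<Sum>l\<in>{Suc k<..<Suc (length w)}. a ((s # w) ! l))) mod int r))) [0..<length w]"
    by simp
  also have "\<dots> = (s, nat ((int i - int (wdeg a w)) mod int r)) #
        map (\<lambda>k. (w ! k, nat ((int i - int (\<Sum>l\<in>{k<..<length w}. a (w ! l))) mod int r))) [0..<length w]"
    by (simp only: sum_shift_gl sum_shift_0 wdeg_nth nth_Cons_Suc)
  finally show ?case using Cons by simp
qed

lemma word_path_alt: "word_path r a w i = (if w = [] then Triv i else Arrs (wp_arrs r a w i))"
  unfolding word_path_def using wp_arrs_map by simp

lemma mod_nat_int: "0 < r \<Longrightarrow> int (nat (x mod int r)) = x mod int r"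
  by simp

lemma nat_mod_lt: "0 < r \<Longrightarrow> nat (x mod int r) < r"
  by (simp add: nat_less_iff)

lemma nat_mod_id: "i < r \<Longrightarrow> nat (int i mod int r) = i"
  by (simp add: zmod_int)

lemma shift_comp: "0 < r \<Longrightarrow>
  nat ((int (nat ((int i - int d1) mod int r)) - int d2) mod int r) = nat ((int i - int (d2 + d1)) mod int r)"
  by (simp add: mod_diff_left_eq algebra_simps)

lemma wp_arrs_append:
  assumes "0 < r"
  shows "wp_arrs r a (u @ v) i = wp_arrs r a u (nat ((int i - int (wdeg a v)) mod int r)) @ wp_arrs r a v i"
proof (induction u)
  case Nil then show ?case by simp
next
  case (Cons s u)
  have "int (nat ((int i - int (wdeg a v)) mod int r)) = (int i - int (wdeg a v)) mod int r"
    using assms by simp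
  then have "nat ((int (nat ((int i - int (wdeg a v)) mod int r)) - int (wdeg a u)) mod int r)
      = nat ((int i - int (wdeg a (u @ v))) mod int r)"
    by (simp add: mod_diff_left_eq algebra_simps)
  then show ?case using Cons by simp
qed

lemma wp_arrs_length[simp]: "length (wp_arrs r a w i) = length w"
  by (induction w) auto

lemma wp_arrs_fst[simp]: "map fst (wp_arrs r a w i) = w"
  by (induction w) auto

lemma wp_arrs_Nil_iff[simp]: "(wp_arrs r a w i = []) = (w = [])"
  by (cases w) auto

lemma wp_arrs_last: "w \<noteq> [] \<Longrightarrow> i < r \<Longrightarrow> snd (last (wp_arrs r a w i)) = i"
proof (induction w)
  case Nil then show ?case by simp
next
  case (Cons s w) then show ?case by (cases w) (auto simp: nat_mod_id)
qed

lemma wp_arrs_hd: "w \<noteq> [] \<Longrightarrow> hd (wp_arrs r a w i) = (hd w, nat ((int i - int (wdeg a (tl w))) mod int r))"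
  by (cases w) auto

fun pword :: "qpath \<Rightarrow> nat list" where
  "pword (Triv i) = []"
| "pword (Arrs es) = map fst es"

lemma valid_Cons:
  "valid_path n r a (Arrs (e # es)) \<longleftrightarrow> valid_arrow n r e \<and>
     (es = [] \<or> (arr_tgt e = arr_src r a (hd es) \<and> valid_path n r a (Arrs es)))"
proof -
  have "(\<forall>k. Suc k < length (e # es) \<longrightarrow> arr_tgt ((e # es) ! k) = arr_src r a ((e # es) ! Suc k))
      \<longleftrightarrow> (es = [] \<or> (arr_tgt e = arr_src r a (hd es) \<and>
            (\<forall>k. Suc k < length es \<longrightarrow> arr_tgt (es ! k) = arr_src r a (es ! Suc k))))"
    (is "?A \<longleftrightarrow> ?B")
  proof
    assume A: ?A
    show ?B
    proof (cases es)
      case Nil then show ?thesis by simp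
    next
      case (Cons e' es')
      have "arr_tgt e = arr_src r a (hd es)" using A[rule_format, of 0] Cons by simp
      moreover have "arr_tgt (es ! k) = arr_src r a (es ! Suc k)" if "Suc k < length es" for k
        using A[rule_format, of "Suc k"] that by simp
      ultimately show ?thesis by blast
    qed
  next
    assume B: ?B
    show ?A
    proof (intro allI impI)
      fix k assume k: "Suc k < length (e # es)"
      show "arr_tgt ((e # es) ! k) = arr_src r a ((e # es) ! Suc k)"
      proof (cases k)
        case 0 then show ?thesis using B k by (cases es) auto
      next
        case (Suc k') then show ?thesis using B k by auto
      qed
    qed
  qed
  then show ?thesis by auto
qed

lemma valid_wp_arrs:
  assumes "0 < r" "i < r" "set w \<subseteq> {1..n}" "w \<noteq> []"
  shows "valid_path n r a (Arrs (wp_arrs r a w i))"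
  using assms(3,4)
proof (induction w)
  case Nil then show ?case by simp
next
  case (Cons s w)
  show ?case
  proof (cases "w = []")
    case True then show ?thesis using Cons.prems assms
      by (simp add: valid_Cons valid_arrow_def nat_mod_lt)
  next
    case False
    have "arr_tgt (s, nat ((int i - int (wdeg a w)) mod int r)) = arr_src r a (hd (wp_arrs r a w i))"
      using False assms(1) by (cases w) (auto simp: arr_tgt_def arr_src_def mod_diff_left_eq algebra_simps)
    moreover have "valid_path n r a (Arrs (wp_arrs r a w i))" using Cons False by simp
    ultimately show ?thesis using Cons.prems assms False
      by (simp only: wp_arrs.simps valid_Cons) (auto simp: valid_arrow_def nat_mod_lt)
  qed
qed

lemma valid_path_wp:
  assumes "0 < r" "valid_path n r a (Arrs es)"
  shows "es = wp_arrs r a (map fst es) (snd (last es))"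
  using assms(2)
proof (induction es)
  case Nil then show ?case by simp
next
  case (Cons e es)
  show ?case
  proof (cases "es = []")
    case True
    then have "snd e < r" using Cons.prems by (simp add: valid_Cons valid_arrow_def)
    then show ?thesis using True by (cases e) (simp add: nat_mod_id)
  next
    case False
    have "valid_arrow n r e \<and> (es = [] \<or> (arr_tgt e = arr_src r a (hd es) \<and> valid_path n r a (Arrs es)))"
      using Cons.prems by (simp only: valid_Cons)
    then have v: "valid_path n r a (Arrs es)" and t: "arr_tgt e = arr_src r a (hd es)"
      using False by auto
    have IH: "es = wp_arrs r a (map fst es) (snd (last es))" using Cons.IH v by simp
    obtain s w where sw: "map fst es = s # w" using False by (cases es) auto
    have "hd es = (s, nat ((int (snd (last es)) - int (wdeg a w)) mod int r))"
      using IH sw by (metis list.sel(1) wp_arrs.simps(2))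
    then have "snd e = nat ((int (snd (last es)) - int (wdeg a (s # w))) mod int r)"
      using t assms(1) by (simp add: arr_tgt_def arr_src_def mod_diff_left_eq algebra_simps)
    then have "e = (fst e, nat ((int (snd (last es)) - int (wdeg a (map fst es))) mod int r))"
      using sw by (cases e) simp
    then show ?thesis using IH False
      by (metis last_ConsR list.simps(9) wp_arrs.simps(2))
  qed
qed

context
  fixes n r :: nat and a :: "nat \<Rightarrow> nat"
  assumes r_pos: "0 < r"
begin

lemma pword_wp[simp]: "pword (word_path r a w i) = w"
  by (simp add: word_path_alt)

lemma tgt_wp[simp]: "i < r \<Longrightarrow> path_tgt (word_path r a w i) = i"
  by (auto simp: word_path_alt arr_tgt_def wp_arrs_last)

lemma src_wp: "i < r \<Longrightarrow> path_src r a (word_path r a w i) = nat ((int i - int (wdeg a w)) mod int r)"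
  by (cases w) (auto simp: word_path_alt arr_src_def nat_mod_id mod_diff_left_eq algebra_simps)

lemma valid_wp: "i < r \<Longrightarrow> valid_path n r a (word_path r a w i) \<longleftrightarrow> set w \<subseteq> {1..n}"
proof (cases "w = []")
  case True then show "i < r \<Longrightarrow> ?thesis" by (simp add: word_path_alt)
next
  case False
  assume i: "i < r"
  show ?thesis
  proof
    assume v: "valid_path n r a (word_path r a w i)"
    then have "\<forall>e\<in>set (wp_arrs r a w i). valid_arrow n r e" using False by (simp add: word_path_alt)
    then show "set w \<subseteq> {1..n}"
      by (metis (no_types, lifting) image_subsetI wp_arrs_fst set_map valid_arrow_def)
  next
    assume "set w \<subseteq> {1..n}"
    then show "valid_path n r a (word_path r a w i)"
      using valid_wp_arrs[OF r_pos i] False by (simp add: word_path_alt)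
  qed
qed

end

lemma sum_fun_apply: "(sum f A) x = (\<Sum>a\<in>A. f a x)"
  by (induction A rule: infinite_finite_induct) auto

abbreviation sh :: "nat \<Rightarrow> (nat \<Rightarrow> nat) \<Rightarrow> nat \<Rightarrow> nat list \<Rightarrow> nat" where
  "sh r a i v \<equiv> nat ((int i - int (wdeg a v)) mod int r)"

context
  fixes n r :: nat and a :: "nat \<Rightarrow> nat"
  assumes r_pos: "0 < r"
begin

lemma sh_lt: "sh r a i v < r"
  using r_pos by (simp add: nat_less_iff)

lemma valid_tgt_lt: "valid_path n r a p \<Longrightarrow> path_tgt p < r"
proof (cases p)
  case (Triv i) then show "valid_path n r a p \<Longrightarrow> path_tgt p < r" by simp
next
  case (Arrs es)
  assume v: "valid_path n r a p"
  then have "es \<noteq> []" "valid_arrow n r (last es)" using Arrs by auto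
  then show ?thesis using Arrs by (simp add: valid_arrow_def arr_tgt_def)
qed

lemma valid_wp_pword: "valid_path n r a p \<Longrightarrow> word_path r a (pword p) (path_tgt p) = p"
proof (cases p)
  case (Triv i) then show "valid_path n r a p \<Longrightarrow> ?thesis" by (simp add: word_path_alt)
next
  case (Arrs es)
  assume v: "valid_path n r a p"
  then have ne: "es \<noteq> []" using Arrs by auto
  have "es = wp_arrs r a (map fst es) (snd (last es))"
    using valid_path_wp[OF r_pos] v Arrs by simp
  then show ?thesis using Arrs ne by (simp add: word_path_alt arr_tgt_def)
qed

lemma pmult_wp:
  assumes i: "i < r"
  shows "path_mult r a (word_path r a u (sh r a i v)) (word_path r a v i) = Some (word_path r a (u @ v) i)"
proof -
  have t: "path_tgt (word_path r a u (sh r a i v)) = path_src r a (word_path r a v i)"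
    using tgt_wp[OF r_pos sh_lt] src_wp[OF r_pos i] by simp
  have "path_cat (word_path r a u (sh r a i v)) (word_path r a v i) = word_path r a (u @ v) i"
  proof (cases "u = []")
    case True then show ?thesis by (simp add: word_path_alt)
  next
    case False
    show ?thesis
    proof (cases "v = []")
      case True
      then show ?thesis using False i by (simp add: word_path_alt nat_mod_id)
    next
      case vne: False
      then show ?thesis using False by (simp add: word_path_alt wp_arrs_append[OF r_pos])
    qed
  qed
  then show ?thesis using t by (simp add: path_mult_def)
qed

lemma pmult_valid_decomp:
  assumes "valid_path n r a q1" "valid_path n r a q2" "path_mult r a q1 q2 = Some p"
  shows "q1 = word_path r a (pword q1) (sh r a (path_tgt q2) (pword q2))"
    and "q2 = word_path r a (pword q2) (path_tgt q2)"
    and "p = word_path r a (pword q1 @ pword q2) (path_tgt q2)"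
proof -
  let ?j = "path_tgt q2"
  have j: "?j < r" using valid_tgt_lt[OF assms(2)] .
  show q2: "q2 = word_path r a (pword q2) ?j" using valid_wp_pword[OF assms(2)] by simp
  have "path_tgt q1 = path_src r a q2" using assms(3) by (simp add: path_mult_def split: if_splits)
  also have "\<dots> = sh r a ?j (pword q2)" using src_wp[OF r_pos j, where a=a and w="pword q2"] by (simp only: q2[symmetric])
  finally show q1: "q1 = word_path r a (pword q1) (sh r a ?j (pword q2))"
    using valid_wp_pword[OF assms(1)] by simp
  have "path_mult r a q1 q2 = Some (word_path r a (pword q1 @ pword q2) ?j)"
    using pmult_wp[OF j, where u="pword q1" and v="pword q2"] by (simp only: q1[symmetric] q2[symmetric])
  then show "p = word_path r a (pword q1 @ pword q2) ?j" using assms(3) by simp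
qed

end

definition shiftv :: "nat \<Rightarrow> (nat \<Rightarrow> nat) \<Rightarrow> nat list \<Rightarrow> (nat \<Rightarrow> 'k::field) \<Rightarrow> nat \<Rightarrow> 'k" where
  "shiftv r a v f = (\<lambda>i. if i < r then f (sh r a i v) else 0)"

definition CP :: "nat \<Rightarrow> (nat \<Rightarrow> 'k::field) set" where "CP r = {f. \<forall>i\<ge>r. f i = 0}"
definition eP :: "nat \<Rightarrow> nat \<Rightarrow> 'k::field" where "eP r = (\<lambda>i. if i < r then 1 else 0)"

abbreviation WP :: "nat \<Rightarrow> nat \<Rightarrow> (nat \<Rightarrow> nat) \<Rightarrow> (nat list \<Rightarrow> nat \<Rightarrow> 'k::field) ring" where
  "WP n r a \<equiv> calg (shiftv r a) {w. set w \<subseteq> {1..n}} (CP r) (eP r)"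

definition dec :: "nat \<Rightarrow> nat \<Rightarrow> (nat \<Rightarrow> nat) \<Rightarrow> (nat list \<Rightarrow> nat \<Rightarrow> 'k::field) \<Rightarrow> qpath \<Rightarrow> 'k" where
  "dec n r a H = (\<lambda>p. if valid_path n r a p then H (pword p) (path_tgt p) else 0)"

definition enc :: "nat \<Rightarrow> nat \<Rightarrow> (nat \<Rightarrow> nat) \<Rightarrow> (qpath \<Rightarrow> 'k::field) \<Rightarrow> nat list \<Rightarrow> nat \<Rightarrow> 'k" where
  "enc n r a F = (\<lambda>w i. if i < r \<and> set w \<subseteq> {1..n} then F (word_path r a w i) else 0)"

context
  fixes n r :: nat and a :: "nat \<Rightarrow> nat"
  assumes r_pos: "0 < r"
begin

lemma setting_P: "conv_setting (shiftv r a) {w. set w \<subseteq> {1..n}} (CP r) (eP r :: nat \<Rightarrow> 'k::field)"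
proof
  fix v and x y :: "nat \<Rightarrow> 'k"
  show "shiftv r a v (x + y) = shiftv r a v x + shiftv r a v y" by (auto simp: shiftv_def)
  show "shiftv r a v (x * y) = shiftv r a v x * shiftv r a v y" by (auto simp: shiftv_def)
next
  fix x :: "nat \<Rightarrow> 'k" assume "x \<in> CP r"
  then show "shiftv r a [] x = x" by (auto simp: shiftv_def CP_def nat_mod_id)
next
  fix u v and x :: "nat \<Rightarrow> 'k"
  show "shiftv r a (u @ v) x = shiftv r a v (shiftv r a u x)"
  proof
    fix i
    have h: "((int i - int (wdeg a v)) mod int r - int (wdeg a u)) mod int r = (int i - int (wdeg a (u @ v))) mod int r"
      by (simp add: mod_diff_left_eq algebra_simps)
    show "shiftv r a (u @ v) x i = shiftv r a v (shiftv r a u x) i"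
      using h sh_lt[OF r_pos] r_pos by (simp add: shiftv_def)
  qed
next
  fix v and x :: "nat \<Rightarrow> 'k" assume "x \<in> CP r"
  then show "shiftv r a v x \<in> CP r" by (simp add: shiftv_def CP_def)
next
  fix v show "shiftv r a v (eP r) = (eP r :: nat \<Rightarrow> 'k)"
    using sh_lt[OF r_pos] by (auto simp: shiftv_def eP_def)
qed (auto simp: CP_def eP_def)

lemma ring_WP: "ring (WP n r a :: (nat list \<Rightarrow> nat \<Rightarrow> 'k::field) ring)"
  by (rule conv_setting.calg_ring[OF setting_P])

lemma WP_carrierD:
  assumes "H \<in> carrier (WP n r a)" "H w i \<noteq> 0"
  shows "set w \<subseteq> {1..n}" "i < r"
proof -
  have "H w \<noteq> 0" using assms(2) by auto
  then show "set w \<subseteq> {1..n}" using assms(1) by (auto simp: calg_def)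
  show "i < r" using assms by (auto simp: calg_def CP_def) (meson not_le)
qed

lemma dec_wp:
  assumes "H \<in> carrier (WP n r a)" "i < r"
  shows "dec n r a H (word_path r a w i) = H w i"
proof (cases "set w \<subseteq> {1..n}")
  case True then show ?thesis using assms by (simp add: dec_def valid_wp[OF r_pos])
next
  case False
  then have "H w i = 0" using WP_carrierD[OF assms(1)] by blast
  then show ?thesis using assms False by (simp add: dec_def valid_wp[OF r_pos])
qed

lemma dec_carrier:
  assumes H: "H \<in> carrier (WP n r a)"
  shows "dec n r a H \<in> carrier (path_alg n r a)"
proof -
  have fin: "finite {w. H w \<noteq> 0}" using H by (simp add: calg_def)
  have "{p. dec n r a H p \<noteq> 0} \<subseteq> (\<lambda>(w,i). word_path r a w i) ` ({w. H w \<noteq> 0} \<times> {..<r})"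
  proof
    fix p assume "p \<in> {p. dec n r a H p \<noteq> 0}"
    then have v: "valid_path n r a p" and nz: "H (pword p) (path_tgt p) \<noteq> 0"
      by (auto simp: dec_def split: if_splits)
    have "p = word_path r a (pword p) (path_tgt p)" using valid_wp_pword[OF r_pos v] by simp
    moreover have "H (pword p) \<noteq> 0" using nz by auto
    moreover have "path_tgt p < r" using valid_tgt_lt[OF r_pos v] .
    ultimately show "p \<in> (\<lambda>(w,i). word_path r a w i) ` ({w. H w \<noteq> 0} \<times> {..<r})"
      by (intro image_eqI[of _ _ "(pword p, path_tgt p)"]) auto
  qed
  moreover have "finite ((\<lambda>(w,i). word_path r a w i) ` ({w. H w \<noteq> 0} \<times> {..<r}))"
    using fin by simp
  ultimately have "finite {p. dec n r a H p \<noteq> 0}" by (rule finite_subset)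
  then show ?thesis by (auto simp: path_alg_def dec_def split: if_splits)
qed

lemma enc_carrier:
  assumes F: "F \<in> carrier (path_alg n r a)"
  shows "enc n r a F \<in> carrier (WP n r a)" "dec n r a (enc n r a F) = F"
proof -
  have fin: "finite {p. F p \<noteq> 0}" and vF: "\<And>p. F p \<noteq> 0 \<Longrightarrow> valid_path n r a p"
    using F by (auto simp: path_alg_def)
  have "{w. enc n r a F w \<noteq> 0} \<subseteq> pword ` {p. F p \<noteq> 0}"
  proof
    fix w assume "w \<in> {w. enc n r a F w \<noteq> 0}"
    then have "enc n r a F w \<noteq> 0" by simp
    then have "\<exists>i. enc n r a F w i \<noteq> 0" by (auto simp: fun_eq_iff)
    then obtain i where "enc n r a F w i \<noteq> 0" by blast
    then have "F (word_path r a w i) \<noteq> 0" by (auto simp: enc_def split: if_splits)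
    then show "w \<in> pword ` {p. F p \<noteq> 0}" by (intro image_eqI[of _ _ "word_path r a w i"]) (auto simp: pword_wp[OF r_pos])
  qed
  then have "finite {w. enc n r a F w \<noteq> 0}" using fin by (meson finite_imageI finite_subset)
  moreover have "\<forall>w. enc n r a F w \<noteq> 0 \<longrightarrow> set w \<subseteq> {1..n}"
  proof (intro allI impI)
    fix w assume "enc n r a F w \<noteq> 0"
    then have "\<exists>i. enc n r a F w i \<noteq> 0" by (auto simp: fun_eq_iff)
    then show "set w \<subseteq> {1..n}" by (auto simp: enc_def split: if_splits)
  qed
  moreover have "\<forall>w. enc n r a F w \<in> CP r" by (auto simp: enc_def CP_def)
  ultimately show "enc n r a F \<in> carrier (WP n r a)" by (simp add: calg_def)
  show "dec n r a (enc n r a F) = F"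
  proof
    fix p
    show "dec n r a (enc n r a F) p = F p"
    proof (cases "valid_path n r a p")
      case True
      have t: "path_tgt p < r" using valid_tgt_lt[OF r_pos True] .
      have "set (pword p) \<subseteq> {1..n}"
        using True t valid_wp[OF r_pos t, where n=n and a=a and w="pword p"] valid_wp_pword[OF r_pos True] by simp
      then show ?thesis using True t valid_wp_pword[OF r_pos True] by (simp add: dec_def enc_def)
    next
      case False
      then show ?thesis using vF by (auto simp: dec_def)
    qed
  qed
qed

lemma dec_inj:
  assumes "H1 \<in> carrier (WP n r a)" "H2 \<in> carrier (WP n r a)" "dec n r a H1 = dec n r a H2"
  shows "H1 = H2"
proof (intro ext)
  fix w i
  show "H1 w i = H2 w i"
  proof (cases "i < r")
    case True
    then show ?thesis using dec_wp[OF assms(1) True, of w] dec_wp[OF assms(2) True, of w] assms(3) by simp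
  next
    case False
    have "H1 w i = 0" using WP_carrierD(2)[OF assms(1), of w i] False by blast
    moreover have "H2 w i = 0" using WP_carrierD(2)[OF assms(2), of w i] False by blast
    ultimately show ?thesis by simp
  qed
qed

lemma dec_bij: "bij_betw (dec n r a) (carrier (WP n r a)) (carrier (path_alg n r a))"
  unfolding bij_betw_def
proof
  show "inj_on (dec n r a) (carrier (WP n r a))" using dec_inj by (auto intro: inj_onI)
  show "dec n r a ` carrier (WP n r a) = carrier (path_alg n r a)"
  proof
    show "dec n r a ` carrier (WP n r a) \<subseteq> carrier (path_alg n r a)" using dec_carrier by auto
    show "carrier (path_alg n r a) \<subseteq> dec n r a ` carrier (WP n r a)"
    proof
      fix F assume F: "F \<in> carrier (path_alg n r a)"
      show "F \<in> dec n r a ` carrier (WP n r a)"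
        by (rule image_eqI[of _ _ "enc n r a F"]) (use enc_carrier[OF F] in auto)
    qed
  qed
qed

end

context
  fixes n r :: nat and a :: "nat \<Rightarrow> nat"
  assumes r_pos: "0 < r"
begin

lemma valid_pword_set:
  assumes v: "valid_path n r a q" shows "set (pword q) \<subseteq> {1..n}"
proof -
  have "valid_path n r a (word_path r a (pword q) (path_tgt q))"
    using v by (simp add: valid_wp_pword[OF r_pos v])
  then show ?thesis using valid_wp[OF r_pos valid_tgt_lt[OF r_pos v]] by simp
qed

lemma dec_nz_valid: "dec n r a H q \<noteq> 0 \<Longrightarrow> valid_path n r a q"
  by (auto simp: dec_def split: if_splits)

lemma dec_mult:
  assumes H1: "H1 \<in> carrier (WP n r a)" and H2: "H2 \<in> carrier (WP n r a)"
  shows "dec n r a (conv (shiftv r a) H1 H2) = dec n r a H1 \<otimes>\<^bsub>path_alg n r a\<^esub> dec n r a H2"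
proof
  fix p
  let ?D1 = "dec n r a H1" and ?D2 = "dec n r a H2"
  let ?T = "{(q1,q2). ?D1 q1 \<noteq> 0 \<and> ?D2 q2 \<noteq> 0 \<and> path_mult r a q1 q2 = Some p}"
  have R: "(?D1 \<otimes>\<^bsub>path_alg n r a\<^esub> ?D2) p = (\<Sum>(q1,q2)\<in>?T. ?D1 q1 * ?D2 q2)"
    by (simp add: path_alg_def)
  have decomp: "valid_path n r a (word_path r a (pword q1 @ pword q2) (path_tgt q2)) \<and>
      p = word_path r a (pword q1 @ pword q2) (path_tgt q2) \<and>
      q1 = word_path r a (pword q1) (sh r a (path_tgt q2) (pword q2)) \<and>
      q2 = word_path r a (pword q2) (path_tgt q2) \<and> path_tgt q2 < r"
    if "(q1,q2) \<in> ?T" for q1 q2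
  proof -
    have v1: "valid_path n r a q1" and v2: "valid_path n r a q2" and m: "path_mult r a q1 q2 = Some p"
      using that dec_nz_valid by auto
    have t: "path_tgt q2 < r" using valid_tgt_lt[OF r_pos v2] .
    have "set (pword q1 @ pword q2) \<subseteq> {1..n}" using valid_pword_set[OF v1] valid_pword_set[OF v2] by simp
    then show ?thesis using pmult_valid_decomp[OF r_pos v1 v2 m] valid_wp[OF r_pos t] t by simp
  qed
  show "dec n r a (conv (shiftv r a) H1 H2) p = (?D1 \<otimes>\<^bsub>path_alg n r a\<^esub> ?D2) p"
  proof (cases "valid_path n r a p")
    case False
    have Te: "?T = {}"
    proof (rule ccontr)
      assume "?T \<noteq> {}"
      then obtain q1 q2 where qT: "(q1,q2) \<in> ?T" by auto
      have "valid_path n r a (word_path r a (pword q1 @ pword q2) (path_tgt q2))"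
        and "p = word_path r a (pword q1 @ pword q2) (path_tgt q2)"
        using decomp[OF qT] by blast+
      then show False using False by simp
    qed
    have "(?D1 \<otimes>\<^bsub>path_alg n r a\<^esub> ?D2) p = 0" using R by (simp only: Te sum.empty)
    moreover have "dec n r a (conv (shiftv r a) H1 H2) p = 0" using False by (simp add: dec_def)
    ultimately show ?thesis by simp
  next
    case True
    define w where "w = pword p"
    define i where "i = path_tgt p"
    have i: "i < r" unfolding i_def using valid_tgt_lt[OF r_pos True] .
    have pw: "p = word_path r a w i" unfolding w_def i_def using valid_wp_pword[OF r_pos True] by simp
    define g where "g = (\<lambda>(u,v). (word_path r a u (sh r a i v), word_path r a v i))"
    have sub: "?T \<subseteq> g ` splits w"
    proof
      fix x assume x: "x \<in> ?T"
      obtain q1 q2 where q: "x = (q1,q2)" by (cases x)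
      have d: "p = word_path r a (pword q1 @ pword q2) (path_tgt q2)"
        "q1 = word_path r a (pword q1) (sh r a (path_tgt q2) (pword q2))"
        "q2 = word_path r a (pword q2) (path_tgt q2)" "path_tgt q2 < r"
        using decomp[of q1 q2] x q by blast+
      have weq: "w = pword q1 @ pword q2" unfolding w_def by (simp add: d(1) pword_wp[OF r_pos])
      have ieq: "i = path_tgt q2" unfolding i_def by (simp add: d(1) tgt_wp[OF r_pos d(4)])
      show "x \<in> g ` splits w"
      proof (rule image_eqI[of _ _ "(pword q1, pword q2)"])
        show "x = g (pword q1, pword q2)"
          by (simp add: q g_def ieq d(2)[symmetric] d(3)[symmetric])
        show "(pword q1, pword q2) \<in> splits w" by (simp add: weq)
      qed
    qed
    have zero: "(case x of (q1,q2) \<Rightarrow> ?D1 q1 * ?D2 q2) = 0" if xin: "x \<in> g ` splits w - ?T" for x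
    proof -
      have "x \<in> g ` splits w" using xin by blast
      then obtain y where y: "y \<in> splits w" "x = g y" by blast
      obtain u v where "y = (u,v)" by (cases y)
      then have uv: "(u,v) \<in> splits w" "x = g (u,v)" using y by simp_all
      have "path_mult r a (fst x) (snd x) = Some p"
        using pmult_wp[OF r_pos i, of a u v] uv pw by (simp add: g_def)
      then show ?thesis using xin by (cases x) auto
    qed
    have inj: "inj_on g (splits w)"
    proof (rule inj_onI)
      fix x y assume "x \<in> splits w" "y \<in> splits w" and gxy: "g x = g y"
      have pg: "pword (fst (g z)) = fst z \<and> pword (snd (g z)) = snd z" for z
        by (cases z) (simp add: g_def pword_wp[OF r_pos])
      have "fst x = fst y" using pg[of x] pg[of y] gxy by metis
      moreover have "snd x = snd y" using pg[of x] pg[of y] gxy by metis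
      ultimately show "x = y" by (simp add: prod_eq_iff)
    qed
    have "(\<Sum>(q1,q2)\<in>?T. ?D1 q1 * ?D2 q2) = (\<Sum>x\<in>g ` splits w. case x of (q1,q2) \<Rightarrow> ?D1 q1 * ?D2 q2)"
      by (rule sum.mono_neutral_left) (use sub zero in auto)
    also have "\<dots> = (\<Sum>x\<in>splits w. case g x of (q1,q2) \<Rightarrow> ?D1 q1 * ?D2 q2)"
      by (rule sum.reindex[OF inj, unfolded comp_def])
    also have "\<dots> = (\<Sum>(u,v)\<in>splits w. H1 u (sh r a i v) * H2 v i)"
      by (rule sum.cong) (auto simp: g_def dec_wp[OF r_pos H1 sh_lt[OF r_pos]] dec_wp[OF r_pos H2 i])
    also have "\<dots> = conv (shiftv r a) H1 H2 w i"
      unfolding conv_def sum_fun_apply by (rule sum.cong) (auto simp: shiftv_def i)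
    finally show ?thesis using R True by (simp add: dec_def w_def i_def)
  qed
qed

lemma dec_add: "dec n r a (\<lambda>w. H1 w + H2 w) = (\<lambda>p. dec n r a H1 p + dec n r a H2 p)"
  by (auto simp: dec_def)

lemma dec_one: "dec n r a (\<lambda>w. if w = [] then eP r else 0) = \<one>\<^bsub>path_alg n r a\<^esub>"
proof
  fix p show "dec n r a (\<lambda>w. if w = [] then eP r else 0) p = \<one>\<^bsub>path_alg n r a\<^esub> p"
    by (cases p) (auto simp: dec_def path_alg_def eP_def)
qed

lemma dec_hom: "dec n r a \<in> ring_hom (WP n r a) (path_alg n r a)"
  apply (rule ring_hom_memI)
  subgoal for x by (rule dec_carrier[OF r_pos])
  subgoal for x y using dec_mult[of x y] by (simp add: calg_def)
  subgoal for x y using dec_add[of x y] by (simp add: calg_def path_alg_def)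
  subgoal using dec_one by (simp add: calg_def)
  done

lemma ring_P: "ring (path_alg n r a :: (qpath \<Rightarrow> 'k::field) ring)"
proof -
  have "ring ((path_alg n r a :: (qpath \<Rightarrow> 'k) ring) \<lparr>carrier := dec n r a ` carrier (WP n r a), zero := dec n r a \<zero>\<^bsub>WP n r a\<^esub>\<rparr>)"
    by (rule ring.ring_hom_imp_img_ring[OF ring_WP[OF r_pos] dec_hom])
  moreover have "dec n r a ` carrier (WP n r a) = carrier (path_alg n r a :: (qpath \<Rightarrow> 'k) ring)"
  proof -
    have "bij_betw (dec n r a) (carrier (WP n r a)) (carrier (path_alg n r a :: (qpath \<Rightarrow> 'k) ring))"
      by (rule dec_bij[OF r_pos])
    then show ?thesis unfolding bij_betw_def by blast
  qed
  moreover have "dec n r a \<zero>\<^bsub>WP n r a\<^esub> = (\<zero>\<^bsub>path_alg n r a\<^esub> :: qpath \<Rightarrow> 'k)"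
    by (auto simp: dec_def calg_def path_alg_def)
  ultimately show ?thesis by simp
qed

end

definition E :: "'k::field \<Rightarrow> nat \<Rightarrow> int \<Rightarrow> 'k" where
  "E \<xi> r k = \<xi> ^ nat (k mod int r)"

context
  fixes r :: nat and \<xi> :: "'k::field_char_0"
  assumes r_pos: "0 < r" and xi_r: "\<xi> ^ r = 1" and prim: "\<forall>p. 0 < p \<and> p < r \<longrightarrow> \<xi> ^ p \<noteq> 1"
begin

lemma pow_mod: "\<xi> ^ m = \<xi> ^ (m mod r)"
proof -
  have "\<xi> ^ m = \<xi> ^ (r * (m div r) + m mod r)" by simp
  also have "\<dots> = (\<xi> ^ r) ^ (m div r) * \<xi> ^ (m mod r)" by (simp only: power_add power_mult)
  finally show ?thesis using xi_r by simp
qed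

lemma E_cong: "x mod int r = y mod int r \<Longrightarrow> E \<xi> r x = E \<xi> r y"
  by (simp add: E_def)

lemma E_int: "E \<xi> r (int m) = \<xi> ^ m"
proof -
  have "nat (int m mod int r) = m mod r" by (metis nat_int zmod_int)
  then show ?thesis using pow_mod[of m] by (simp add: E_def)
qed

lemma E_add: "E \<xi> r (x + y) = E \<xi> r x * E \<xi> r y"
proof -
  have nx: "0 \<le> x mod int r" "0 \<le> y mod int r" using r_pos by simp_all
  have "E \<xi> r x * E \<xi> r y = \<xi> ^ (nat (x mod int r) + nat (y mod int r))"
    by (simp add: E_def power_add)
  also have "\<dots> = E \<xi> r (int (nat (x mod int r) + nat (y mod int r)))" by (simp only: E_int)
  also have "\<dots> = E \<xi> r (x + y)"
    by (rule E_cong) (use nx in \<open>simp add: mod_add_eq\<close>)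
  finally show ?thesis by simp
qed

lemma E_zero[simp]: "E \<xi> r 0 = 1" by (simp add: E_def)

lemma E_mult_pow: "E \<xi> r (int k * d) = E \<xi> r d ^ k"
proof (induction k)
  case 0 then show ?case by simp
next
  case (Suc k)
  have "int (Suc k) * d = d + int k * d" by (simp add: algebra_simps)
  then show ?case using Suc by (simp add: E_add)
qed

lemma E_r_pow: "E \<xi> r d ^ r = 1"
proof -
  have "E \<xi> r d ^ r = (\<xi> ^ r) ^ nat (d mod int r)" by (simp add: E_def power_mult[symmetric] mult.commute)
  then show ?thesis using xi_r by simp
qed

lemma orth:
  assumes "p1 < r" "p2 < r"
  shows "(\<Sum>k<r. E \<xi> r (int k * (int p1 - int p2))) = (if p1 = p2 then of_nat r else 0)"
proof (cases "p1 = p2")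
  case True then show ?thesis by simp
next
  case False
  let ?x = "E \<xi> r (int p1 - int p2)"
  have m: "nat ((int p1 - int p2) mod int r) \<noteq> 0"
  proof
    assume "nat ((int p1 - int p2) mod int r) = 0"
    then have "(int p1 - int p2) mod int r = 0" using r_pos by (simp add: nat_eq_iff)
    then have "int p1 mod int r = int p2 mod int r" by (simp add: mod_eq_dvd_iff mod_eq_0_iff_dvd)
    then have "int (p1 mod r) = int (p2 mod r)" by (simp only: zmod_int)
    then have "p1 = p2" using assms by simp
    then show False using False by simp
  qed
  moreover have "nat ((int p1 - int p2) mod int r) < r" using r_pos by (simp add: nat_less_iff)
  ultimately have "?x \<noteq> 1" using prim by (simp add: E_def)
  then have "(\<Sum>k<r. ?x ^ k) = 0" using E_r_pow by (simp add: sum_gp_strict)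
  then show ?thesis using False by (simp add: E_mult_pow)
qed

end

lemma gact_iter: "(gact \<xi> a ^^ q) G = (\<lambda>w. \<xi> ^ (q * wdeg a w) * G w)"
  by (induction q) (auto simp: gact_def power_add mult.assoc)

lemma finsum_free:
  assumes "finite A" "f \<in> A \<rightarrow> carrier (free_alg n)"
  shows "finsum (free_alg n) f A = (\<lambda>w. \<Sum>x\<in>A. (f x w :: 'k::field))"
  using assms
proof (induction A rule: finite_induct)
  case empty
  interpret R: ring "free_alg n :: (nat list \<Rightarrow> 'k) ring" by (rule ring_R)
  have "finsum (free_alg n) f {} = \<zero>\<^bsub>free_alg n\<^esub>" by (rule R.finsum_empty)
  then show ?case by (simp add: free_alg_def)
next
  case (insert x A)
  interpret R: ring "free_alg n :: (nat list \<Rightarrow> 'k) ring" by (rule ring_R)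
  have "finsum (free_alg n) f (insert x A) = f x \<oplus>\<^bsub>free_alg n\<^esub> finsum (free_alg n) f A"
    using insert by (intro R.finsum_insert) auto
  then show ?case using insert by (simp add: free_alg_def)
qed

definition Four :: "nat \<Rightarrow> 'k \<Rightarrow> (nat \<Rightarrow> nat list \<Rightarrow> 'k) \<Rightarrow> nat list \<Rightarrow> nat \<Rightarrow> 'k::field" where
  "Four r \<xi> F = (\<lambda>w i. if i < r then (\<Sum>p<r. F p w * E \<xi> r (- (int i * int p))) else 0)"

definition Inv :: "nat \<Rightarrow> 'k \<Rightarrow> (nat list \<Rightarrow> nat \<Rightarrow> 'k) \<Rightarrow> nat \<Rightarrow> nat list \<Rightarrow> 'k::field" where
  "Inv r \<xi> H = (\<lambda>p. if p < r then (\<lambda>w. (\<Sum>i<r. H w i * E \<xi> r (int i * int p)) / of_nat r) else (\<lambda>w. 0))"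

lemma RG_carrier: "F \<in> carrier (skew_alg (free_alg n) \<sigma> r) \<longleftrightarrow>
   (\<forall>p<r. F p \<in> carrier (free_alg n)) \<and> (\<forall>p\<ge>r. F p = (\<lambda>w. 0 :: 'k::field))"
  by (simp add: skew_alg_def free_alg_def)

lemma free_carrier: "(F :: nat list \<Rightarrow> 'k::field) \<in> carrier (free_alg n) \<longleftrightarrow>
   finite {w. F w \<noteq> 0} \<and> (\<forall>w. F w \<noteq> 0 \<longrightarrow> set w \<subseteq> {1..n})"
  by (simp add: free_alg_def)

lemma gact_iter_carrier:
  assumes "G \<in> carrier (free_alg n)"
  shows "(gact \<xi> a ^^ q) G \<in> carrier (free_alg n :: (nat list \<Rightarrow> 'k::field) ring)"
proof -
  have "{w. \<xi> ^ (q * wdeg a w) * G w \<noteq> 0} \<subseteq> {w. G w \<noteq> 0}" by auto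
  then show ?thesis using assms unfolding gact_iter free_carrier by (auto intro: finite_subset)
qed

context
  fixes n r :: nat and a :: "nat \<Rightarrow> nat" and \<xi> :: "'k::field_char_0"
  assumes r_pos: "0 < r" and xi_r: "\<xi> ^ r = 1" and prim: "\<forall>p. 0 < p \<and> p < r \<longrightarrow> \<xi> ^ p \<noteq> 1"
begin

lemma E_sh: "E \<xi> r (- (int (sh r a i v) * int q)) = \<xi> ^ (q * wdeg a v) * E \<xi> r (- (int i * int q))"
proof -
  have "int (sh r a i v) = (int i - int (wdeg a v)) mod int r" using r_pos by simp
  then have "E \<xi> r (- (int (sh r a i v) * int q)) = E \<xi> r ((- int q) * ((int i - int (wdeg a v)) mod int r))"
    by (simp add: algebra_simps)
  also have "\<dots> = E \<xi> r ((- int q) * (int i - int (wdeg a v)))"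
    by (rule E_cong[OF r_pos xi_r prim]) (metis mod_minus_eq mod_mult_right_eq mult_minus_left)
  also have "\<dots> = E \<xi> r (int (q * wdeg a v) + - (int i * int q))"
    by (simp add: algebra_simps)
  also have "\<dots> = \<xi> ^ (q * wdeg a v) * E \<xi> r (- (int i * int q))"
    by (simp only: E_add[OF r_pos xi_r prim] E_int[OF r_pos xi_r prim])
  finally show ?thesis .
qed

lemma E_summod: "E \<xi> r (- (int i * int ((q + s) mod r))) = E \<xi> r (- (int i * int q)) * E \<xi> r (- (int i * int s))"
proof -
  have "E \<xi> r (- (int i * int ((q + s) mod r))) = E \<xi> r ((- int i) * ((int q + int s) mod int r))"
    by (simp add: zmod_int)
  also have "\<dots> = E \<xi> r ((- int i) * (int q + int s))"
    by (rule E_cong[OF r_pos xi_r prim]) (metis mod_minus_eq mod_mult_right_eq mult_minus_left)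
  also have "\<dots> = E \<xi> r (- (int i * int q) + - (int i * int s))"
    by (simp add: algebra_simps)
  also have "\<dots> = E \<xi> r (- (int i * int q)) * E \<xi> r (- (int i * int s))"
    by (simp only: E_add[OF r_pos xi_r prim])
  finally show ?thesis .
qed

lemma Four_carrier:
  assumes F: "F \<in> carrier (skew_alg (free_alg n) (gact \<xi> a) r)"
  shows "Four r \<xi> F \<in> carrier (WP n r a)"
proof -
  have Fp: "\<And>p. p < r \<Longrightarrow> F p \<in> carrier (free_alg n)" using F by (simp add: RG_carrier)
  have nz: "\<exists>p<r. F p w \<noteq> 0" if "Four r \<xi> F w \<noteq> 0" for w
  proof (rule ccontr)
    assume "\<not> (\<exists>p<r. F p w \<noteq> 0)"
    then have "Four r \<xi> F w = 0" by (auto simp: Four_def fun_eq_iff)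
    then show False using that by simp
  qed
  have "{w. Four r \<xi> F w \<noteq> 0} \<subseteq> (\<Union>p<r. {w. F p w \<noteq> 0})" using nz by blast
  moreover have "finite (\<Union>p<r. {w. F p w \<noteq> 0})" using Fp by (simp add: free_carrier)
  ultimately have "finite {w. Four r \<xi> F w \<noteq> 0}" by (rule finite_subset)
  moreover have "set w \<subseteq> {1..n}" if "Four r \<xi> F w \<noteq> 0" for w
    using nz[OF that] Fp by (auto simp: free_carrier)
  moreover have "Four r \<xi> F w \<in> CP r" for w by (simp add: Four_def CP_def)
  ultimately show ?thesis by (simp add: calg_def)
qed

lemma Inv_carrier:
  assumes H: "H \<in> carrier (WP n r a)"
  shows "Inv r \<xi> H \<in> carrier (skew_alg (free_alg n) (gact \<xi> a) r)"
proof -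
  have fH: "finite {w. H w \<noteq> 0}" and sH: "\<And>w. H w \<noteq> 0 \<Longrightarrow> set w \<subseteq> {1..n}"
    using H by (auto simp: calg_def)
  have "Inv r \<xi> H p \<in> carrier (free_alg n)" if p: "p < r" for p
  proof -
    have sub: "{w. Inv r \<xi> H p w \<noteq> 0} \<subseteq> {w. H w \<noteq> 0}" using p by (auto simp: Inv_def)
    then have "finite {w. Inv r \<xi> H p w \<noteq> 0}" using fH by (rule finite_subset)
    then show ?thesis using sub sH by (auto simp: free_carrier)
  qed
  then show ?thesis by (simp add: RG_carrier Inv_def)
qed

lemma Four_Inv:
  assumes H: "H \<in> carrier (WP n r a)"
  shows "Four r \<xi> (Inv r \<xi> H) = H"
proof (intro ext)
  fix w i
  show "Four r \<xi> (Inv r \<xi> H) w i = H w i"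
  proof (cases "i < r")
    case False
    then have "H w i = 0" using H by (auto simp: calg_def CP_def)
    then show ?thesis using False by (simp add: Four_def)
  next
    case True
    have "Four r \<xi> (Inv r \<xi> H) w i = (\<Sum>p<r. (\<Sum>j<r. H w j * E \<xi> r (int j * int p)) / of_nat r * E \<xi> r (- (int i * int p)))"
      using True by (simp add: Four_def Inv_def)
    also have "\<dots> = (\<Sum>p<r. \<Sum>j<r. H w j / of_nat r * E \<xi> r (int p * (int j - int i)))"
    proof (intro sum.cong refl)
      fix p
      have "E \<xi> r (int j * int p) * E \<xi> r (- (int i * int p)) = E \<xi> r (int p * (int j - int i))" for j
        by (simp add: E_add[OF r_pos xi_r prim, symmetric] algebra_simps)
      then show "(\<Sum>j<r. H w j * E \<xi> r (int j * int p)) / of_nat r * E \<xi> r (- (int i * int p)) =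
          (\<Sum>j<r. H w j / of_nat r * E \<xi> r (int p * (int j - int i)))"
        by (simp add: sum_divide_distrib sum_distrib_right mult.assoc)
    qed
    also have "\<dots> = (\<Sum>j<r. H w j / of_nat r * (\<Sum>p<r. E \<xi> r (int p * (int j - int i))))"
      by (subst sum.swap) (simp add: sum_distrib_left)
    also have "\<dots> = (\<Sum>j<r. if j = i then H w j else 0)"
      by (intro sum.cong refl) (use True r_pos in \<open>simp add: orth[OF r_pos xi_r prim]\<close>)
    also have "\<dots> = H w i" using True by simp
    finally show ?thesis .
  qed
qed

lemma Inv_Four:
  assumes F: "F \<in> carrier (skew_alg (free_alg n) (gact \<xi> a) r)"
  shows "Inv r \<xi> (Four r \<xi> F) = F"
proof (intro ext)
  fix p w
  show "Inv r \<xi> (Four r \<xi> F) p w = F p w"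
  proof (cases "p < r")
    case False
    then show ?thesis using F by (simp add: Inv_def RG_carrier)
  next
    case True
    have "Inv r \<xi> (Four r \<xi> F) p w = (\<Sum>i<r. (\<Sum>q<r. F q w * E \<xi> r (- (int i * int q))) * E \<xi> r (int i * int p)) / of_nat r"
      using True by (simp add: Four_def Inv_def)
    also have "\<dots> = (\<Sum>i<r. \<Sum>q<r. F q w / of_nat r * E \<xi> r (int i * (int p - int q)))"
    proof -
      have "E \<xi> r (- (int i * int q)) * E \<xi> r (int i * int p) = E \<xi> r (int i * (int p - int q))" for i q
        by (simp add: E_add[OF r_pos xi_r prim, symmetric] algebra_simps)
      then show ?thesis
        by (simp add: sum_divide_distrib sum_distrib_right mult.assoc)
    qed
    also have "\<dots> = (\<Sum>q<r. F q w / of_nat r * (\<Sum>i<r. E \<xi> r (int i * (int p - int q))))"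
      by (subst sum.swap) (simp add: sum_distrib_left)
    also have "\<dots> = (\<Sum>q<r. if p = q then F q w else 0)"
      by (intro sum.cong refl) (use True r_pos in \<open>simp add: orth[OF r_pos xi_r prim]\<close>)
    also have "\<dots> = F p w" using True by simp
    finally show ?thesis .
  qed
qed

end

definition Tset :: "nat \<Rightarrow> nat \<Rightarrow> (nat \<times> nat) set" where
  "Tset r p = {(q,s). q < r \<and> s < r \<and> (q + s) mod r = p}"

lemma finite_Tset[simp]: "finite (Tset r p)"
proof -
  have "Tset r p \<subseteq> {..<r} \<times> {..<r}" by (auto simp: Tset_def)
  then show ?thesis by (rule finite_subset) simp
qed

lemma RG_mult_apply:
  assumes F: "F \<in> carrier (skew_alg (free_alg n) (gact \<xi> a) r)"
    and G: "G \<in> carrier (skew_alg (free_alg n) (gact \<xi> a) r)" and p: "p < r"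
  shows "(F \<otimes>\<^bsub>skew_alg (free_alg n) (gact \<xi> a) r\<^esub> G) p w =
    (\<Sum>x\<in>Tset r p. \<Sum>(u,v)\<in>splits w. F (fst x) u * (\<xi> ^ (fst x * wdeg a v) * G (snd x) v :: 'k::field))"
proof -
  interpret R: ring "free_alg n :: (nat list \<Rightarrow> 'k) ring" by (rule ring_R)
  let ?f = "\<lambda>(q,s). F q \<otimes>\<^bsub>free_alg n\<^esub> (gact \<xi> a ^^ q) (G s)"
  have "?f \<in> Tset r p \<rightarrow> carrier (free_alg n)"
  proof
    fix x assume "x \<in> Tset r p"
    then obtain q s where x: "x = (q,s)" "q < r" "s < r" by (auto simp: Tset_def)
    have "F q \<in> carrier (free_alg n)" "G s \<in> carrier (free_alg n)" using F G x by (auto simp: RG_carrier)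
    then show "?f x \<in> carrier (free_alg n)" using x by (auto intro!: R.m_closed gact_iter_carrier)
  qed
  then have "(F \<otimes>\<^bsub>skew_alg (free_alg n) (gact \<xi> a) r\<^esub> G) p = (\<lambda>w. \<Sum>x\<in>Tset r p. ?f x w)"
    using p finsum_free[OF finite_Tset] by (simp add: skew_alg_def Tset_def)
  then show ?thesis
    by (simp add: free_mult_conv conv_def gact_iter case_prod_beta)
qed

context
  fixes n r :: nat and a :: "nat \<Rightarrow> nat" and \<xi> :: "'k::field_char_0"
  assumes r_pos: "0 < r" and xi_r: "\<xi> ^ r = 1" and prim: "\<forall>p. 0 < p \<and> p < r \<longrightarrow> \<xi> ^ p \<noteq> 1"
begin

lemma Four_mult:
  assumes F: "F \<in> carrier (skew_alg (free_alg n) (gact \<xi> a) r)"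
    and G: "G \<in> carrier (skew_alg (free_alg n) (gact \<xi> a) r)"
  shows "Four r \<xi> (F \<otimes>\<^bsub>skew_alg (free_alg n) (gact \<xi> a) r\<^esub> G) = conv (shiftv r a) (Four r \<xi> F) (Four r \<xi> G)"
proof (intro ext)
  fix w i
  let ?M = "F \<otimes>\<^bsub>skew_alg (free_alg n) (gact \<xi> a) r\<^esub> G"
  show "Four r \<xi> ?M w i = conv (shiftv r a) (Four r \<xi> F) (Four r \<xi> G) w i"
  proof (cases "i < r")
    case False
    then show ?thesis by (simp add: Four_def conv_def sum_fun_apply shiftv_def case_prod_beta)
  next
    case True
    let ?X = "\<lambda>q s x. F q (fst x) * (\<xi> ^ (q * wdeg a (snd x)) * G s (snd x)) * (E \<xi> r (- (int i * int q)) * E \<xi> r (- (int i * int s)))"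
    let ?Z = "\<lambda>x. (\<Sum>(u,v)\<in>splits w. F (fst x) u * (\<xi> ^ (fst x * wdeg a v) * G (snd x) v)) *
                 E \<xi> r (- (int i * int ((fst x + snd x) mod r)))"
    have "Four r \<xi> ?M w i = (\<Sum>p<r. ?M p w * E \<xi> r (- (int i * int p)))"
      using True by (simp add: Four_def)
    also have "\<dots> = (\<Sum>p<r. \<Sum>x\<in>Tset r p. ?Z x)"
    proof (intro sum.cong refl)
      fix p assume "p \<in> {..<r}"
      then have p: "p < r" by simp
      have "?M p w * E \<xi> r (- (int i * int p)) =
          (\<Sum>x\<in>Tset r p. (\<Sum>(u,v)\<in>splits w. F (fst x) u * (\<xi> ^ (fst x * wdeg a v) * G (snd x) v)) * E \<xi> r (- (int i * int p)))"
        by (simp add: RG_mult_apply[OF F G p] sum_distrib_right)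
      also have "\<dots> = (\<Sum>x\<in>Tset r p. ?Z x)"
        by (intro sum.cong refl) (auto simp: Tset_def)
      finally show "?M p w * E \<xi> r (- (int i * int p)) = (\<Sum>x\<in>Tset r p. ?Z x)" .
    qed
    also have "\<dots> = (\<Sum>p<r. \<Sum>x\<in>{x. x \<in> {..<r} \<times> {..<r} \<and> (fst x + snd x) mod r = p}. ?Z x)"
      by (intro sum.cong refl arg_cong2[where f=sum]) (auto simp: Tset_def)
    also have "\<dots> = (\<Sum>x\<in>{..<r} \<times> {..<r}. ?Z x)"
      by (rule sum.group) (use r_pos in auto)
    also have "\<dots> = (\<Sum>q<r. \<Sum>s<r. ?Z (q,s))"
      unfolding sum.cartesian_product by (intro sum.cong refl) (simp add: case_prod_beta)
    also have "\<dots> = (\<Sum>q<r. \<Sum>s<r. \<Sum>x\<in>splits w. ?X q s x)"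
      by (simp add: E_summod[OF r_pos xi_r prim] sum_distrib_right case_prod_beta)
    also have "\<dots> = (\<Sum>x\<in>splits w. \<Sum>q<r. \<Sum>s<r. ?X q s x)"
    proof -
      have "(\<Sum>q<r. \<Sum>s<r. \<Sum>x\<in>splits w. ?X q s x) = (\<Sum>q<r. \<Sum>x\<in>splits w. \<Sum>s<r. ?X q s x)"
        by (intro sum.cong refl) (rule sum.swap)
      also have "\<dots> = (\<Sum>x\<in>splits w. \<Sum>q<r. \<Sum>s<r. ?X q s x)"
        by (rule sum.swap)
      finally show ?thesis .
    qed
    also have "\<dots> = conv (shiftv r a) (Four r \<xi> F) (Four r \<xi> G) w i"
    proof -
      have "conv (shiftv r a) (Four r \<xi> F) (Four r \<xi> G) w i =
          (\<Sum>(u,v)\<in>splits w. Four r \<xi> F u (sh r a i v) * Four r \<xi> G v i)"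
        unfolding conv_def sum_fun_apply using True by (intro sum.cong refl) (auto simp: shiftv_def)
      also have "\<dots> = (\<Sum>x\<in>splits w. \<Sum>q<r. \<Sum>s<r. ?X q s x)"
        unfolding case_prod_beta
      proof (intro sum.cong refl)
        fix x assume "x \<in> splits w"
        obtain u v where x: "x = (u,v)" by (cases x)
        have "Four r \<xi> F u (sh r a i v) * Four r \<xi> G v i =
            (\<Sum>q<r. F q u * E \<xi> r (- (int (sh r a i v) * int q))) * (\<Sum>s<r. G s v * E \<xi> r (- (int i * int s)))"
          using True sh_lt[OF r_pos] by (simp add: Four_def)
        also have "\<dots> = (\<Sum>q<r. \<Sum>s<r. ?X q s (u,v))"
          unfolding E_sh[OF r_pos xi_r prim] by (simp add: sum_product algebra_simps) (subst sum.swap, simp add: algebra_simps)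
        finally show "Four r \<xi> F (fst x) (sh r a i (snd x)) * Four r \<xi> G (snd x) i =
            (\<Sum>q<r. \<Sum>s<r. ?X q s x)" using x by simp
      qed
      finally show ?thesis by simp
    qed
    finally show ?thesis .
  qed
qed

lemma Four_add:
  assumes F: "F \<in> carrier (skew_alg (free_alg n) (gact \<xi> a) r)"
    and G: "G \<in> carrier (skew_alg (free_alg n) (gact \<xi> a) r)"
  shows "Four r \<xi> (F \<oplus>\<^bsub>skew_alg (free_alg n) (gact \<xi> a) r\<^esub> G) = (\<lambda>w. Four r \<xi> F w + Four r \<xi> G w)"
  by (auto simp: Four_def skew_alg_def free_alg_def sum.distrib algebra_simps fun_eq_iff)

lemma Four_one:
  "Four r \<xi> (\<one>\<^bsub>skew_alg (free_alg n) (gact \<xi> a) r\<^esub>) = (\<lambda>w. if w = [] then eP r else 0)"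
proof (intro ext)
  fix w :: "nat list" and i :: nat
  have o1: "\<one>\<^bsub>free_alg n\<^esub> = (\<lambda>w. if w = [] then 1 else (0::'k))" by (simp add: free_alg_def)
  have o2: "\<zero>\<^bsub>free_alg n\<^esub> = (\<lambda>w. 0::'k)" by (simp add: free_alg_def)
  have one_eq: "\<one>\<^bsub>skew_alg (free_alg n) (gact \<xi> a) r\<^esub> = (\<lambda>p. if p = 0 then (\<lambda>w. if w = [] then 1 else 0) else (\<lambda>w. 0 :: 'k))"
  proof
    fix p show "\<one>\<^bsub>skew_alg (free_alg n) (gact \<xi> a) r\<^esub> p = (if p = 0 then (\<lambda>w. if w = [] then 1 else 0) else (\<lambda>w. 0 :: 'k))"
      by (cases "p = 0") (simp_all add: skew_alg_def o1 o2)
  qed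
  have "(\<Sum>p<r. (if p = 0 then (\<lambda>w. if w = [] then 1 else 0) else (\<lambda>w. 0 :: 'k)) w * E \<xi> r (- (int i * int p)))
      = (\<Sum>p<r. if p = 0 then (if w = [] then 1 else 0) else (0::'k))"
    by (intro sum.cong refl) (auto simp: E_def)
  also have "\<dots> = (if w = [] then 1 else 0)" using r_pos by (simp add: sum.delta E_def)
  finally have S: "(\<Sum>p<r. (if p = 0 then (\<lambda>w. if w = [] then 1 else 0) else (\<lambda>w. 0 :: 'k)) w * E \<xi> r (- (int i * int p))) = (if w = [] then 1 else 0)" .
  show "Four r \<xi> (\<one>\<^bsub>skew_alg (free_alg n) (gact \<xi> a) r\<^esub>) w i = (if w = [] then eP r else 0) i"
    unfolding one_eq Four_def S by (simp add: eP_def)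
qed

end

definition Psi :: "nat \<Rightarrow> nat \<Rightarrow> (nat \<Rightarrow> nat) \<Rightarrow> 'k \<Rightarrow> (nat \<Rightarrow> nat list \<Rightarrow> 'k::field) \<Rightarrow> qpath \<Rightarrow> 'k" where
  "Psi n r a \<xi> F = dec n r a (Four r \<xi> F)"

context
  fixes n r :: nat and a :: "nat \<Rightarrow> nat" and \<xi> :: "'k::field_char_0"
  assumes r_pos: "0 < r" and xi_r: "\<xi> ^ r = 1" and prim: "\<forall>p. 0 < p \<and> p < r \<longrightarrow> \<xi> ^ p \<noteq> 1"
begin

abbreviation "RG \<equiv> skew_alg (free_alg n) (gact \<xi> a) r"
abbreviation "PA \<equiv> (path_alg n r a :: (qpath \<Rightarrow> 'k) ring)"

lemma Psi_carrier: "F \<in> carrier RG \<Longrightarrow> Psi n r a \<xi> F \<in> carrier PA"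
  unfolding Psi_def by (rule dec_carrier[OF r_pos Four_carrier[OF r_pos xi_r prim]])

lemma Psi_inj: "F \<in> carrier RG \<Longrightarrow> G \<in> carrier RG \<Longrightarrow> Psi n r a \<xi> F = Psi n r a \<xi> G \<Longrightarrow> F = G"
  unfolding Psi_def
  by (metis Four_carrier[OF r_pos xi_r prim] Inv_Four[OF r_pos xi_r prim] dec_inj[OF r_pos])

lemma Psi_surj: "X \<in> carrier PA \<Longrightarrow> \<exists>F\<in>carrier RG. X = Psi n r a \<xi> F"
proof -
  assume X: "X \<in> carrier PA"
  have e: "enc n r a X \<in> carrier (WP n r a)" "dec n r a (enc n r a X) = X"
    using enc_carrier[OF r_pos X] by auto
  show ?thesis
  proof (rule bexI[of _ "Inv r \<xi> (enc n r a X)"])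
    show "Inv r \<xi> (enc n r a X) \<in> carrier RG" by (rule Inv_carrier[OF r_pos xi_r prim e(1)])
    show "X = Psi n r a \<xi> (Inv r \<xi> (enc n r a X))"
      unfolding Psi_def using Four_Inv[OF r_pos xi_r prim e(1)] e(2) by simp
  qed
qed

lemma Psi_bij: "bij_betw (Psi n r a \<xi>) (carrier RG) (carrier PA)"
  unfolding bij_betw_def
proof
  show "inj_on (Psi n r a \<xi>) (carrier RG)" using Psi_inj by (auto intro: inj_onI)
  show "Psi n r a \<xi> ` carrier RG = carrier PA" using Psi_carrier Psi_surj by blast
qed

lemma Psi_mult: "F \<in> carrier RG \<Longrightarrow> G \<in> carrier RG \<Longrightarrow>
    Psi n r a \<xi> (F \<otimes>\<^bsub>RG\<^esub> G) = Psi n r a \<xi> F \<otimes>\<^bsub>PA\<^esub> Psi n r a \<xi> G"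
  unfolding Psi_def
  by (simp add: Four_mult[OF r_pos xi_r prim] dec_mult[OF r_pos Four_carrier[OF r_pos xi_r prim] Four_carrier[OF r_pos xi_r prim]])

lemma Psi_add: "F \<in> carrier RG \<Longrightarrow> G \<in> carrier RG \<Longrightarrow>
    Psi n r a \<xi> (F \<oplus>\<^bsub>RG\<^esub> G) = (\<lambda>p. Psi n r a \<xi> F p + Psi n r a \<xi> G p)"
  unfolding Psi_def by (simp add: Four_add[OF r_pos xi_r prim] dec_add[OF r_pos])

lemma Psi_add': "F \<in> carrier RG \<Longrightarrow> G \<in> carrier RG \<Longrightarrow>
    Psi n r a \<xi> (F \<oplus>\<^bsub>RG\<^esub> G) = Psi n r a \<xi> F \<oplus>\<^bsub>PA\<^esub> Psi n r a \<xi> G"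
  using Psi_add by (simp add: path_alg_def)

lemma Psi_one: "Psi n r a \<xi> \<one>\<^bsub>RG\<^esub> = \<one>\<^bsub>PA\<^esub>"
  unfolding Psi_def by (simp add: Four_one[OF r_pos xi_r prim] dec_one[OF r_pos])

lemma Psi_hom: "Psi n r a \<xi> \<in> ring_hom RG PA"
  by (rule ring_hom_memI) (simp_all add: Psi_carrier Psi_mult Psi_add' Psi_one)

end

definition cst :: "nat \<Rightarrow> (nat list \<Rightarrow> 'k::field) \<Rightarrow> nat list \<Rightarrow> nat \<Rightarrow> 'k" where
  "cst r x = (\<lambda>w i. if i < r then x w else 0)"

definition Hji :: "(nat list \<Rightarrow> 'k::field) \<Rightarrow> nat \<Rightarrow> nat list \<Rightarrow> nat \<Rightarrow> 'k" where
  "Hji x i = (\<lambda>w i'. if i' = i then x w else 0)"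

definition gp :: "nat \<Rightarrow> 'k \<Rightarrow> nat \<Rightarrow> nat list \<Rightarrow> nat \<Rightarrow> 'k::field" where
  "gp r \<xi> p = (\<lambda>w i. if w = [] \<and> i < r then E \<xi> r (- (int i * int p)) else 0)"

lemma sum_in_ideal:
  assumes "ideal J P" "finite A" "\<And>i. i \<in> A \<Longrightarrow> g i \<in> J"
    and add: "\<And>x y. x \<in> J \<Longrightarrow> y \<in> J \<Longrightarrow> x \<oplus>\<^bsub>P\<^esub> y = (\<lambda>p. x p + y p)"
    and zero: "\<zero>\<^bsub>P\<^esub> = (\<lambda>p. 0)"
  shows "(\<lambda>p. \<Sum>i\<in>A. g i p :: 'k::field) \<in> J"
  using assms(2,3)
proof (induction A rule: finite_induct)
  case empty
  have "\<zero>\<^bsub>P\<^esub> \<in> J" using assms(1) by (simp add: additive_subgroup.zero_closed ideal.axioms(1))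
  then show ?case using zero by simp
next
  case (insert x A)
  have "g x \<oplus>\<^bsub>P\<^esub> (\<lambda>p. \<Sum>i\<in>A. g i p) \<in> J"
    using insert assms(1) by (simp add: additive_subgroup.a_closed ideal.axioms(1))
  then show ?case using insert add[of "g x" "\<lambda>p. \<Sum>i\<in>A. g i p"] by simp
qed

lemma finsum_in_ideal:
  assumes R: "ring R" and I: "ideal I R" "finite A" "\<And>i. i \<in> A \<Longrightarrow> g i \<in> I"
  shows "finsum R g A \<in> I"
  using I(2,3)
proof (induction A rule: finite_induct)
  case empty
  interpret ring R by fact
  show ?case using I(1) by (simp add: additive_subgroup.zero_closed ideal.axioms(1))
next
  case (insert x A)
  interpret ring R by fact
  have gc: "g \<in> insert x A \<rightarrow> carrier R" using insert ideal.Icarr[OF I(1)] by auto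
  have "finsum R g (insert x A) = g x \<oplus>\<^bsub>R\<^esub> finsum R g A"
    using insert gc by (intro finsum_insert) auto
  then show ?case using insert I(1) by (simp add: additive_subgroup.a_closed ideal.axioms(1))
qed

context
  fixes n r :: nat and a :: "nat \<Rightarrow> nat" and \<xi> :: "'k::field_char_0"
  assumes r_pos: "0 < r" and xi_r: "\<xi> ^ r = 1" and prim: "\<forall>p. 0 < p \<and> p < r \<longrightarrow> \<xi> ^ p \<noteq> 1"
begin

lemma cst_carrier: "x \<in> carrier (free_alg n) \<Longrightarrow> cst r x \<in> carrier (WP n r a)"
proof -
  assume x: "x \<in> carrier (free_alg n)"
  have "{w. cst r x w \<noteq> 0} \<subseteq> {w. x w \<noteq> 0}" by (auto simp: cst_def fun_eq_iff)
  moreover have "finite {w. x w \<noteq> 0}" using x by (simp add: free_carrier)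
  ultimately have "finite {w. cst r x w \<noteq> 0}" by (rule finite_subset)
  moreover have "set w \<subseteq> {1..n}" if "cst r x w \<noteq> 0" for w
  proof -
    have "x w \<noteq> 0" using that by (auto simp: cst_def fun_eq_iff split: if_splits)
    then show ?thesis using x by (simp add: free_carrier)
  qed
  ultimately show ?thesis by (simp add: calg_def CP_def cst_def)
qed

lemma cst_mult: "cst r (x \<otimes>\<^bsub>free_alg n\<^esub> y) = conv (shiftv r a) (cst r x) (cst r y)"
proof (intro ext)
  fix w i
  show "cst r (x \<otimes>\<^bsub>free_alg n\<^esub> y) w i = conv (shiftv r a) (cst r x) (cst r y) w i"
    unfolding conv_def sum_fun_apply free_mult_conv
    using sh_lt[OF r_pos] by (auto simp: cst_def shiftv_def conv_def case_prod_beta intro!: sum.cong)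
qed

lemma dec_cst: "dec n r a (cst r x) = (\<lambda>p. if valid_path n r a p then x (pword p) else 0)"
  using valid_tgt_lt[OF r_pos] by (auto simp: dec_def cst_def fun_eq_iff)

lemma iota_hom: "(\<lambda>x :: nat list \<Rightarrow> 'k. dec n r a (cst r x)) \<in> ring_hom (free_alg n) ((path_alg n r a :: (qpath \<Rightarrow> 'k) ring))"
proof (rule ring_hom_memI)
  fix x :: "nat list \<Rightarrow> 'k" assume "x \<in> carrier (free_alg n)"
  then show "dec n r a (cst r x) \<in> carrier ((path_alg n r a :: (qpath \<Rightarrow> 'k) ring))" by (rule dec_carrier[OF r_pos cst_carrier])
next
  fix x y :: "nat list \<Rightarrow> 'k" assume x: "x \<in> carrier (free_alg n)" and y: "y \<in> carrier (free_alg n)"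
  show "dec n r a (cst r (x \<otimes>\<^bsub>free_alg n\<^esub> y)) = dec n r a (cst r x) \<otimes>\<^bsub>(path_alg n r a :: (qpath \<Rightarrow> 'k) ring)\<^esub> dec n r a (cst r y)"
    by (simp add: cst_mult dec_mult[OF r_pos cst_carrier[OF x] cst_carrier[OF y]])
next
  fix x y :: "nat list \<Rightarrow> 'k" assume x: "x \<in> carrier (free_alg n)" and y: "y \<in> carrier (free_alg n)"
  show "dec n r a (cst r (x \<oplus>\<^bsub>free_alg n\<^esub> y)) = dec n r a (cst r x) \<oplus>\<^bsub>(path_alg n r a :: (qpath \<Rightarrow> 'k) ring)\<^esub> dec n r a (cst r y)"
    by (auto simp: dec_cst free_alg_def path_alg_def)
next
  show "dec n r a (cst r \<one>\<^bsub>free_alg n\<^esub>) = \<one>\<^bsub>(path_alg n r a :: (qpath \<Rightarrow> 'k) ring)\<^esub>"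
  proof
    fix p show "dec n r a (cst r \<one>\<^bsub>free_alg n\<^esub>) p = \<one>\<^bsub>(path_alg n r a :: (qpath \<Rightarrow> 'k) ring)\<^esub> p"
      by (cases p) (auto simp: dec_cst free_alg_def path_alg_def)
  qed
qed

end

lemma RG_mult_eq: "(F \<otimes>\<^bsub>skew_alg A \<sigma> r\<^esub> G) p = (if p < r then
    finsum A (\<lambda>(q,s). F q \<otimes>\<^bsub>A\<^esub> (\<sigma> ^^ q) (G s)) (Tset r p) else \<zero>\<^bsub>A\<^esub>)"
  by (simp add: skew_alg_def Tset_def)

lemma gact_iter_mem:
  assumes "gact \<xi> a ` I \<subseteq> I" "x \<in> I"
  shows "(gact \<xi> a ^^ q) x \<in> I"
  by (induction q) (use assms in auto)

locale qsetup =
  fixes n r h :: nat and a :: "nat \<Rightarrow> nat" and \<xi> :: "'k::field_char_0" and f :: "nat \<Rightarrow> nat list \<Rightarrow> 'k"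
  assumes r_pos: "0 < r" and xi_r: "\<xi> ^ r = 1" and prim: "\<forall>p. 0 < p \<and> p < r \<longrightarrow> \<xi> ^ p \<noteq> 1"
    and f_in: "\<forall>j\<in>{1..h}. f j \<in> carrier (free_alg n)"
    and G_acts: "gact \<xi> a ` rel_ideal n f h \<subseteq> rel_ideal n f h"
begin

lemma I_ideal: "ideal (rel_ideal n f h) (free_alg n)"
  unfolding rel_ideal_def by (rule ring.genideal_ideal[OF ring_R]) (use f_in in auto)

lemma f_mem_I: "j \<in> {1..h} \<Longrightarrow> f j \<in> rel_ideal n f h"
proof -
  assume j: "j \<in> {1..h}"
  have "f ` {1..h} \<subseteq> carrier (free_alg n)" using f_in by auto
  then have "f ` {1..h} \<subseteq> rel_ideal n f h"
    unfolding rel_ideal_def by (rule ring.genideal_self[OF ring_R])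
  then show ?thesis using j by auto
qed

lemma Hji_carrier: "x \<in> carrier (free_alg n) \<Longrightarrow> i < r \<Longrightarrow> Hji x i \<in> carrier (WP n r a)"
proof -
  assume x: "x \<in> carrier (free_alg n)" and i: "i < r"
  have "{w. Hji x i w \<noteq> 0} \<subseteq> {w. x w \<noteq> 0}" by (auto simp: Hji_def fun_eq_iff)
  moreover have "finite {w. x w \<noteq> 0}" using x by (simp add: free_carrier)
  ultimately have "finite {w. Hji x i w \<noteq> 0}" by (rule finite_subset)
  moreover have "set w \<subseteq> {1..n}" if "Hji x i w \<noteq> 0" for w
  proof -
    have "x w \<noteq> 0" using that by (auto simp: Hji_def fun_eq_iff split: if_splits)
    then show ?thesis using x by (simp add: free_carrier)
  qed
  ultimately show ?thesis using i by (simp add: calg_def CP_def Hji_def)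
qed

lemma phi_dec:
  assumes x: "x \<in> carrier (free_alg n)" and i: "i < r"
  shows "phi_elem r a x i = dec n r a (Hji x i)"
proof
  fix p
  show "phi_elem r a x i p = dec n r a (Hji x i) p"
  proof (cases "valid_path n r a p \<and> path_tgt p = i")
    case True
    then have pw: "p = word_path r a (pword p) i" using valid_wp_pword[OF r_pos] by metis
    have sub: "{w. x w \<noteq> 0 \<and> word_path r a w i = p} \<subseteq> {pword p}"
      using pword_wp[OF r_pos] by auto
    have "phi_elem r a x i p = (\<Sum>w\<in>{w. x w \<noteq> 0 \<and> word_path r a w i = p}. x w)" by (simp add: phi_elem_def)
    also have "\<dots> = (\<Sum>w\<in>{pword p}. x w)"
      by (rule sum.mono_neutral_left) (use sub pw in auto)
    also have "\<dots> = dec n r a (Hji x i) p" using True by (simp add: dec_def Hji_def)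
    finally show ?thesis .
  next
    case False
    have "{w. x w \<noteq> 0 \<and> word_path r a w i = p} = {}"
    proof (rule ccontr)
      assume "{w. x w \<noteq> 0 \<and> word_path r a w i = p} \<noteq> {}"
      then obtain w where w: "x w \<noteq> 0" "word_path r a w i = p" by auto
      have "set w \<subseteq> {1..n}" using w(1) x by (simp add: free_carrier)
      then have "valid_path n r a p" using w(2) valid_wp[OF r_pos i] by auto
      moreover have "path_tgt p = i" using w(2) tgt_wp[OF r_pos i] by auto
      ultimately show False using False by simp
    qed
    then have "phi_elem r a x i p = 0" by (simp only: phi_elem_def sum.empty)
    moreover have "dec n r a (Hji x i) p = 0" using False by (auto simp: dec_def Hji_def)
    ultimately show ?thesis by simp
  qed
qed

lemma gens_carrier:
  "{phi_elem r a (f j) i | j i. j \<in> {1..h} \<and> i < r} \<subseteq> carrier (path_alg n r a)"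
proof
  fix X assume "X \<in> {phi_elem r a (f j) i | j i. j \<in> {1..h} \<and> i < r}"
  then obtain j i where X: "X = phi_elem r a (f j) i" "j \<in> {1..h}" "i < r" by blast
  have fj: "f j \<in> carrier (free_alg n)" using f_in X(2) by blast
  show "X \<in> carrier (path_alg n r a)"
    using phi_dec[OF fj X(3)] dec_carrier[OF r_pos Hji_carrier[OF fj X(3)]] X(1) by simp
qed

lemma J_ideal: "ideal (quiver_ideal n r a f h) (path_alg n r a)"
  unfolding quiver_ideal_def by (rule ring.genideal_ideal[OF ring_P[OF r_pos] gens_carrier])

end

definition Kset :: "nat \<Rightarrow> nat \<Rightarrow> (nat \<Rightarrow> nat) \<Rightarrow> 'k \<Rightarrow> (nat \<Rightarrow> nat list \<Rightarrow> 'k::field) \<Rightarrow> nat \<Rightarrow> (nat \<Rightarrow> nat list \<Rightarrow> 'k) set" where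
  "Kset n r a \<xi> f h = {F \<in> carrier (skew_alg (free_alg n) (gact \<xi> a) r). \<forall>p<r. F p \<in> rel_ideal n f h}"

lemma R_minus: "x \<in> carrier (free_alg n) \<Longrightarrow> \<ominus>\<^bsub>free_alg n\<^esub> x = (\<lambda>w. - x w :: 'k::field)"
proof -
  assume x: "x \<in> carrier (free_alg n)"
  interpret R: ring "free_alg n :: (nat list \<Rightarrow> 'k) ring" by (rule ring_R)
  have c: "(\<lambda>w. - x w) \<in> carrier (free_alg n)" using x by (simp add: free_carrier)
  have "(\<lambda>w. - x w) \<oplus>\<^bsub>free_alg n\<^esub> x = \<zero>\<^bsub>free_alg n\<^esub>" by (simp add: free_alg_def)
  then show ?thesis using R.minus_equality[OF _ x c] by simp
qed

lemma P_minus: "0 < r \<Longrightarrow> y \<in> carrier (path_alg n r a) \<Longrightarrow> \<ominus>\<^bsub>path_alg n r a\<^esub> y = (\<lambda>q. - y q :: 'k::field)"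
proof -
  assume r: "0 < r" and y: "y \<in> carrier (path_alg n r a)"
  interpret P: ring "path_alg n r a :: (qpath \<Rightarrow> 'k) ring" by (rule ring_P[OF r])
  have c: "(\<lambda>q. - y q) \<in> carrier (path_alg n r a)" using y by (simp add: path_alg_def)
  have "(\<lambda>q. - y q) \<oplus>\<^bsub>path_alg n r a\<^esub> y = \<zero>\<^bsub>path_alg n r a\<^esub>" by (simp add: path_alg_def)
  then show ?thesis using P.minus_equality[OF _ y c] by simp
qed

lemma free_scalar_carrier: "free_scalar c \<in> carrier (free_alg n)"
proof -
  have "{w. free_scalar c w \<noteq> 0} \<subseteq> {[]}" by (auto simp: free_scalar_def)
  then have "finite {w. free_scalar c w \<noteq> 0}" by (rule finite_subset) simp
  then show ?thesis by (auto simp: free_carrier free_scalar_def)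
qed

lemma free_scalar_mult: "free_scalar c \<otimes>\<^bsub>free_alg n\<^esub> x = (\<lambda>w. c * x w :: 'k::field)"
proof
  fix w
  have "(free_scalar c \<otimes>\<^bsub>free_alg n\<^esub> x) w = (\<Sum>(u,v)\<in>splits w. (if u = [] then c * x v else 0))"
    unfolding free_mult_conv conv_def by (intro sum.cong refl) (auto simp: free_scalar_def)
  then show "(free_scalar c \<otimes>\<^bsub>free_alg n\<^esub> x) w = c * x w" by (simp add: sum_splits_Nil_left)
qed

context qsetup
begin

abbreviation "I \<equiv> rel_ideal n f h"
abbreviation "K \<equiv> Kset n r a \<xi> f h"
abbreviation "J \<equiv> quiver_ideal n r a f h"

lemma RG_mult_closed:
  assumes F: "F \<in> carrier (RG n r a \<xi>)" and G: "G \<in> carrier (RG n r a \<xi>)"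
  shows "F \<otimes>\<^bsub>RG n r a \<xi>\<^esub> G \<in> carrier (RG n r a \<xi>)"
proof -
  interpret R: ring "free_alg n :: (nat list \<Rightarrow> 'k) ring" by (rule ring_R)
  have "(F \<otimes>\<^bsub>RG n r a \<xi>\<^esub> G) p \<in> carrier (free_alg n)" if p: "p < r" for p
  proof -
    have "(\<lambda>(q,s). F q \<otimes>\<^bsub>free_alg n\<^esub> (gact \<xi> a ^^ q) (G s)) \<in> Tset r p \<rightarrow> carrier (free_alg n)"
      using F G by (auto simp: Tset_def RG_carrier intro!: R.m_closed gact_iter_carrier)
    then show ?thesis using p by (simp add: RG_mult_eq R.finsum_closed)
  qed
  moreover have "(F \<otimes>\<^bsub>RG n r a \<xi>\<^esub> G) p = (\<lambda>w. 0)" if "\<not> p < r" for p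
    using that by (simp add: RG_mult_eq free_alg_def)
  ultimately show ?thesis by (simp add: RG_carrier)
qed

lemma K_mult:
  assumes F: "F \<in> K" and G: "G \<in> carrier (RG n r a \<xi>)"
  shows "G \<otimes>\<^bsub>RG n r a \<xi>\<^esub> F \<in> K" and "F \<otimes>\<^bsub>RG n r a \<xi>\<^esub> G \<in> K"
proof -
  interpret R: ring "free_alg n :: (nat list \<Rightarrow> 'k) ring" by (rule ring_R)
  have Fc: "F \<in> carrier (RG n r a \<xi>)" and FI: "\<And>p. p < r \<Longrightarrow> F p \<in> I" using F by (auto simp: Kset_def)
  have Gc: "\<And>p. p < r \<Longrightarrow> G p \<in> carrier (free_alg n)" using G by (simp add: RG_carrier)
  have "(G \<otimes>\<^bsub>RG n r a \<xi>\<^esub> F) p \<in> I" if p: "p < r" for p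
  proof -
    have "finsum (free_alg n) (\<lambda>(q,s). G q \<otimes>\<^bsub>free_alg n\<^esub> (gact \<xi> a ^^ q) (F s)) (Tset r p) \<in> I"
    proof (rule finsum_in_ideal[OF ring_R I_ideal finite_Tset])
      fix x assume "x \<in> Tset r p"
      then obtain q s where x: "x = (q,s)" "q < r" "s < r" by (auto simp: Tset_def)
      have "(gact \<xi> a ^^ q) (F s) \<in> I" using gact_iter_mem[OF G_acts FI[OF x(3)]] .
      then show "(case x of (q,s) \<Rightarrow> G q \<otimes>\<^bsub>free_alg n\<^esub> (gact \<xi> a ^^ q) (F s)) \<in> I"
        using x Gc ideal.I_l_closed[OF I_ideal] by auto
    qed
    then show ?thesis using p by (simp add: RG_mult_eq)
  qed
  then show "G \<otimes>\<^bsub>RG n r a \<xi>\<^esub> F \<in> K" using RG_mult_closed[OF G Fc] by (simp add: Kset_def)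
  have "(F \<otimes>\<^bsub>RG n r a \<xi>\<^esub> G) p \<in> I" if p: "p < r" for p
  proof -
    have "finsum (free_alg n) (\<lambda>(q,s). F q \<otimes>\<^bsub>free_alg n\<^esub> (gact \<xi> a ^^ q) (G s)) (Tset r p) \<in> I"
    proof (rule finsum_in_ideal[OF ring_R I_ideal finite_Tset])
      fix x assume "x \<in> Tset r p"
      then obtain q s where x: "x = (q,s)" "q < r" "s < r" by (auto simp: Tset_def)
      have "(gact \<xi> a ^^ q) (G s) \<in> carrier (free_alg n)" using gact_iter_carrier[OF Gc[OF x(3)]] .
      then show "(case x of (q,s) \<Rightarrow> F q \<otimes>\<^bsub>free_alg n\<^esub> (gact \<xi> a ^^ q) (G s)) \<in> I"
        using x FI ideal.I_r_closed[OF I_ideal] by auto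
    qed
    then show ?thesis using p by (simp add: RG_mult_eq)
  qed
  then show "F \<otimes>\<^bsub>RG n r a \<xi>\<^esub> G \<in> K" using RG_mult_closed[OF Fc G] by (simp add: Kset_def)
qed

end

context qsetup
begin

definition negRG :: "(nat \<Rightarrow> nat list \<Rightarrow> 'k) \<Rightarrow> nat \<Rightarrow> nat list \<Rightarrow> 'k" where
  "negRG F = (\<lambda>p w. - F p w)"

lemma negRG_carrier: "F \<in> carrier (RG n r a \<xi>) \<Longrightarrow> negRG F \<in> carrier (RG n r a \<xi>)"
  by (auto simp: negRG_def RG_carrier free_carrier)

lemma Psi_neg: "Psi n r a \<xi> (negRG F) = (\<lambda>q. - Psi n r a \<xi> F q)"
  by (auto simp: Psi_def dec_def Four_def negRG_def sum_negf fun_eq_iff)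

lemma Psi_zero: "Psi n r a \<xi> \<zero>\<^bsub>RG n r a \<xi>\<^esub> = \<zero>\<^bsub>path_alg n r a\<^esub>"
  by (auto simp: Psi_def dec_def Four_def skew_alg_def free_alg_def path_alg_def fun_eq_iff)

lemma K_zero: "\<zero>\<^bsub>RG n r a \<xi>\<^esub> \<in> K"
proof -
  interpret R: ring "free_alg n :: (nat list \<Rightarrow> 'k) ring" by (rule ring_R)
  have "\<zero>\<^bsub>free_alg n\<^esub> \<in> I" using I_ideal by (simp add: additive_subgroup.zero_closed ideal.axioms(1))
  moreover have "\<zero>\<^bsub>RG n r a \<xi>\<^esub> \<in> carrier (RG n r a \<xi>)" by (simp add: skew_alg_def)
  ultimately show ?thesis by (simp add: Kset_def skew_alg_def)
qed

lemma K_add: "F \<in> K \<Longrightarrow> G \<in> K \<Longrightarrow> F \<oplus>\<^bsub>RG n r a \<xi>\<^esub> G \<in> K"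
proof -
  assume F: "F \<in> K" and G: "G \<in> K"
  interpret R: ring "free_alg n :: (nat list \<Rightarrow> 'k) ring" by (rule ring_R)
  have "(F \<oplus>\<^bsub>RG n r a \<xi>\<^esub> G) p \<in> I" if "p < r" for p
    using F G that additive_subgroup.a_closed[OF ideal.axioms(1)[OF I_ideal]]
    by (auto simp: Kset_def skew_alg_def)
  moreover have "F \<oplus>\<^bsub>RG n r a \<xi>\<^esub> G \<in> carrier (RG n r a \<xi>)"
    using F G by (auto simp: Kset_def skew_alg_def)
  ultimately show ?thesis by (simp add: Kset_def)
qed

lemma K_neg: "F \<in> K \<Longrightarrow> negRG F \<in> K"
proof -
  assume F: "F \<in> K"
  have Fc: "F \<in> carrier (RG n r a \<xi>)" using F by (simp add: Kset_def)
  have "negRG F p \<in> I" if p: "p < r" for p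
  proof -
    have "F p \<in> carrier (free_alg n)" "F p \<in> I" using F p by (auto simp: Kset_def RG_carrier)
    then have "\<ominus>\<^bsub>free_alg n\<^esub> (F p) \<in> I"
      using additive_subgroup.a_inv_closed[OF ideal.axioms(1)[OF I_ideal]] by blast
    then show ?thesis using R_minus[OF \<open>F p \<in> carrier (free_alg n)\<close>] by (simp add: negRG_def)
  qed
  then show ?thesis using negRG_carrier[OF Fc] by (simp add: Kset_def)
qed

lemma PK_ideal: "ideal (Psi n r a \<xi> ` K) (path_alg n r a :: (qpath \<Rightarrow> 'k) ring)"
proof -
  interpret P: ring "path_alg n r a :: (qpath \<Rightarrow> 'k) ring" by (rule ring_P[OF r_pos])
  have Kc: "K \<subseteq> carrier (RG n r a \<xi>)" by (auto simp: Kset_def)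
  show ?thesis
  proof (rule idealI[OF ring_P[OF r_pos]])
    have sub: "Psi n r a \<xi> ` K \<subseteq> carrier (path_alg n r a :: (qpath \<Rightarrow> 'k) ring)"
      using Kc Psi_carrier[OF r_pos xi_r prim] by auto
    have inv: "\<ominus>\<^bsub>path_alg n r a\<^esub> x \<in> Psi n r a \<xi> ` K" if xK: "x \<in> Psi n r a \<xi> ` K" for x
    proof -
      obtain F where F: "F \<in> K" "x = Psi n r a \<xi> F" using xK by blast
      have xc: "x \<in> carrier (path_alg n r a)" using F Kc Psi_carrier[OF r_pos xi_r prim] by auto
      have "\<ominus>\<^bsub>path_alg n r a\<^esub> x = Psi n r a \<xi> (negRG F)" using P_minus[OF r_pos xc] F by (simp add: Psi_neg)
      then show ?thesis using K_neg[OF F(1)] by simp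
    qed
    have add: "x \<oplus>\<^bsub>path_alg n r a\<^esub> y \<in> Psi n r a \<xi> ` K" if xyK: "x \<in> Psi n r a \<xi> ` K" "y \<in> Psi n r a \<xi> ` K" for x y
    proof -
      obtain F G where F: "F \<in> K" "x = Psi n r a \<xi> F" and G: "G \<in> K" "y = Psi n r a \<xi> G" using xyK by blast
      have Fc: "F \<in> carrier (RG n r a \<xi>)" and Gc: "G \<in> carrier (RG n r a \<xi>)" using F G Kc by auto
      have "x \<oplus>\<^bsub>path_alg n r a\<^esub> y = Psi n r a \<xi> (F \<oplus>\<^bsub>RG n r a \<xi>\<^esub> G)"
        using Psi_add'[OF r_pos xi_r prim Fc Gc] F G by simp
      then show ?thesis using K_add[OF F(1) G(1)] by simp
    qed
    show "subgroup (Psi n r a \<xi> ` K) (add_monoid (path_alg n r a :: (qpath \<Rightarrow> 'k) ring))"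
      apply (rule P.add.subgroupI)
      subgoal using sub by simp
      subgoal using K_zero by blast
      subgoal for x using inv[of x] by (simp add: a_inv_def)
      subgoal for x y using add[of x y] by simp
      done
  next
    fix x y :: "qpath \<Rightarrow> 'k" assume x: "x \<in> Psi n r a \<xi> ` K" and y: "y \<in> carrier (path_alg n r a)"
    obtain F where F: "F \<in> K" "x = Psi n r a \<xi> F" using x by blast
    obtain G where G: "G \<in> carrier (RG n r a \<xi>)" "y = Psi n r a \<xi> G" using Psi_surj[OF r_pos xi_r prim y] by blast
    have Fc: "F \<in> carrier (RG n r a \<xi>)" using F Kc by auto
    have "y \<otimes>\<^bsub>path_alg n r a\<^esub> x = Psi n r a \<xi> (G \<otimes>\<^bsub>RG n r a \<xi>\<^esub> F)"
      using Psi_mult[OF r_pos xi_r prim G(1) Fc] F G by simp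
    then show "y \<otimes>\<^bsub>path_alg n r a\<^esub> x \<in> Psi n r a \<xi> ` K"
      using K_mult(1)[OF F(1) G(1)] by (metis imageI)
    have "x \<otimes>\<^bsub>path_alg n r a\<^esub> y = Psi n r a \<xi> (F \<otimes>\<^bsub>RG n r a \<xi>\<^esub> G)"
      using Psi_mult[OF r_pos xi_r prim Fc G(1)] F G by simp
    then show "x \<otimes>\<^bsub>path_alg n r a\<^esub> y \<in> Psi n r a \<xi> ` K"
      using K_mult(2)[OF F(1) G(1)] by (metis imageI)
  qed
qed

lemma gens_in_PK: "{phi_elem r a (f j) i | j i. j \<in> {1..h} \<and> i < r} \<subseteq> Psi n r a \<xi> ` K"
proof
  fix X assume "X \<in> {phi_elem r a (f j) i | j i. j \<in> {1..h} \<and> i < r}"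
  then obtain j i where X: "X = phi_elem r a (f j) i" "j \<in> {1..h}" "i < r" by blast
  have fj: "f j \<in> carrier (free_alg n)" using f_in X(2) by blast
  let ?H = "Hji (f j) i"
  have Hc: "?H \<in> carrier (WP n r a)" by (rule Hji_carrier[OF fj X(3)])
  have XP: "X = Psi n r a \<xi> (Inv r \<xi> ?H)"
    using X(1) phi_dec[OF fj X(3)] Four_Inv[OF r_pos xi_r prim Hc] by (simp add: Psi_def)
  have "Inv r \<xi> ?H p \<in> I" if p: "p < r" for p
  proof -
    have "(\<Sum>i'<r. ?H w i' * E \<xi> r (int i' * int p)) = f j w * E \<xi> r (int i * int p)" for w
    proof -
      have "(\<Sum>i'<r. ?H w i' * E \<xi> r (int i' * int p)) = (\<Sum>i'<r. if i' = i then f j w * E \<xi> r (int i * int p) else 0)"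
        by (intro sum.cong refl) (auto simp: Hji_def)
      also have "\<dots> = f j w * E \<xi> r (int i * int p)" using X(3) by simp
      finally show ?thesis .
    qed
    then have "Inv r \<xi> ?H p = free_scalar (E \<xi> r (int i * int p) / of_nat r) \<otimes>\<^bsub>free_alg n\<^esub> f j"
      using p by (simp add: Inv_def free_scalar_mult fun_eq_iff)
    also have "\<dots> \<in> I"
      using ideal.I_l_closed[OF I_ideal f_mem_I[OF X(2)] free_scalar_carrier] .
    finally show ?thesis .
  qed
  then have "Inv r \<xi> ?H \<in> K" using Inv_carrier[OF r_pos xi_r prim Hc] by (simp add: Kset_def)
  then show "X \<in> Psi n r a \<xi> ` K" using XP by blast
qed

lemma J_sub_PK: "J \<subseteq> Psi n r a \<xi> ` K"
  unfolding quiver_ideal_def by (rule ring.genideal_minimal[OF ring_P[OF r_pos] PK_ideal gens_in_PK])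

lemma K_of_J: "F \<in> carrier (RG n r a \<xi>) \<Longrightarrow> Psi n r a \<xi> F \<in> J \<Longrightarrow> F \<in> K"
proof -
  assume F: "F \<in> carrier (RG n r a \<xi>)" and J: "Psi n r a \<xi> F \<in> J"
  then obtain G where G: "G \<in> K" "Psi n r a \<xi> F = Psi n r a \<xi> G" using J_sub_PK by blast
  have "G \<in> carrier (RG n r a \<xi>)" using G by (simp add: Kset_def)
  then have "F = G" using Psi_inj[OF r_pos xi_r prim F _ G(2)] by simp
  then show ?thesis using G by simp
qed

end

context qsetup
begin

lemma gp_carrier: "gp r \<xi> p \<in> carrier (WP n r a)"
proof -
  have "{w. gp r \<xi> p w \<noteq> 0} \<subseteq> {[]}" by (auto simp: gp_def fun_eq_iff)
  then have "finite {w. gp r \<xi> p w \<noteq> 0}" by (rule finite_subset) simp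
  moreover have "\<forall>w. gp r \<xi> p w \<noteq> 0 \<longrightarrow> set w \<subseteq> {1..n}" by (auto simp: gp_def fun_eq_iff)
  ultimately show ?thesis by (simp add: calg_def CP_def gp_def)
qed

lemma conv_cst_gp: "conv (shiftv r a) (cst r x) (gp r \<xi> p) w i = (if i < r then x w * E \<xi> r (- (int i * int p)) else 0)"
proof -
  have "conv (shiftv r a) (cst r x) (gp r \<xi> p) w i = (\<Sum>(u,v)\<in>splits w. if v = [] then shiftv r a [] (cst r x u) i * gp r \<xi> p [] i else 0)"
    unfolding conv_def sum_fun_apply by (intro sum.cong refl) (auto simp: gp_def)
  also have "\<dots> = shiftv r a [] (cst r x w) i * gp r \<xi> p [] i" by (rule sum_splits_Nil_right)
  also have "\<dots> = (if i < r then x w * E \<xi> r (- (int i * int p)) else 0)"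
    by (auto simp: shiftv_def cst_def gp_def nat_mod_id)
  finally show ?thesis .
qed

lemma Four_decomp: "Four r \<xi> F = (\<lambda>w i. \<Sum>p<r. conv (shiftv r a) (cst r (F p)) (gp r \<xi> p) w i)"
  by (auto simp: Four_def conv_cst_gp fun_eq_iff)

lemma dec_sum: "dec n r a (\<lambda>w i. \<Sum>p\<in>A. H p w i) = (\<lambda>q. \<Sum>p\<in>A. dec n r a (H p) q)"
  by (auto simp: dec_def fun_eq_iff)

lemma PA_add: "x \<oplus>\<^bsub>path_alg n r a\<^esub> y = (\<lambda>q. x q + y q)"
  by (simp add: path_alg_def)

lemma PA_zero: "\<zero>\<^bsub>path_alg n r a\<^esub> = (\<lambda>q. 0)"
  by (simp add: path_alg_def)

lemma iota_f: "j \<in> {1..h} \<Longrightarrow> dec n r a (cst r (f j)) \<in> J"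
proof -
  assume j: "j \<in> {1..h}"
  have fj: "f j \<in> carrier (free_alg n)" using f_in j by blast
  have gen: "phi_elem r a (f j) i \<in> J" if "i < r" for i
  proof -
    have "phi_elem r a (f j) i \<in> {phi_elem r a (f j) i | j i. j \<in> {1..h} \<and> i < r}" using j that by blast
    then show ?thesis unfolding quiver_ideal_def
      using ring.genideal_self[OF ring_P[OF r_pos] gens_carrier] by blast
  qed
  have "(\<lambda>q. \<Sum>i<r. phi_elem r a (f j) i q) \<in> J"
    by (rule sum_in_ideal[OF J_ideal finite_lessThan]) (auto simp: gen PA_add PA_zero)
  moreover have "(\<lambda>q. \<Sum>i<r. phi_elem r a (f j) i q) = dec n r a (cst r (f j))"
  proof
    fix q
    have "(\<Sum>i<r. phi_elem r a (f j) i q) = (\<Sum>i<r. dec n r a (Hji (f j) i) q)"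
      by (intro sum.cong refl) (simp add: phi_dec[OF fj])
    also have "\<dots> = dec n r a (cst r (f j)) q"
      using valid_tgt_lt[OF r_pos] by (auto simp: dec_def Hji_def cst_def)
    finally show "(\<Sum>i<r. phi_elem r a (f j) i q) = dec n r a (cst r (f j)) q" .
  qed
  ultimately show ?thesis by simp
qed

lemma I_sub_V: "I \<subseteq> {x \<in> carrier (free_alg n). dec n r a (cst r x) \<in> J}"
proof -
  have hr: "ring_hom_ring (free_alg n) (path_alg n r a) (\<lambda>x :: nat list \<Rightarrow> 'k. dec n r a (cst r x))"
    by (rule ring_hom_ringI2[OF ring_R ring_P[OF r_pos] iota_hom[OF r_pos xi_r prim]])
  have V: "ideal {x \<in> carrier (free_alg n). dec n r a (cst r x) \<in> J} (free_alg n)"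
    by (rule ring_hom_ring.ideal_vimage[OF hr J_ideal])
  show ?thesis unfolding rel_ideal_def
    by (rule ring.genideal_minimal[OF ring_R V]) (use f_in iota_f in auto)
qed

lemma J_of_K: "F \<in> K \<Longrightarrow> Psi n r a \<xi> F \<in> J"
proof -
  assume F: "F \<in> K"
  have FI: "\<And>p. p < r \<Longrightarrow> F p \<in> I" and Fc: "\<And>p. p < r \<Longrightarrow> F p \<in> carrier (free_alg n)"
    using F by (auto simp: Kset_def RG_carrier)
  have "Psi n r a \<xi> F = (\<lambda>q. \<Sum>p<r. dec n r a (conv (shiftv r a) (cst r (F p)) (gp r \<xi> p)) q)"
    unfolding Psi_def Four_decomp dec_sum ..
  also have "\<dots> = (\<lambda>q. \<Sum>p<r. (dec n r a (cst r (F p)) \<otimes>\<^bsub>path_alg n r a\<^esub> dec n r a (gp r \<xi> p)) q)"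
    by (intro ext sum.cong refl)
       (simp add: dec_mult[OF r_pos cst_carrier[OF r_pos xi_r prim Fc] gp_carrier])
  also have "\<dots> \<in> J"
  proof (rule sum_in_ideal[OF J_ideal finite_lessThan])
    fix p assume "p \<in> {..<r}"
    then have p: "p < r" by simp
    have "dec n r a (cst r (F p)) \<in> J" using I_sub_V FI[OF p] by auto
    then show "dec n r a (cst r (F p)) \<otimes>\<^bsub>path_alg n r a\<^esub> dec n r a (gp r \<xi> p) \<in> J"
      by (rule ideal.I_r_closed[OF J_ideal]) (rule dec_carrier[OF r_pos gp_carrier])
  qed (auto simp: PA_add PA_zero)
  finally show ?thesis .
qed

end

lemma my_hom_finsum:
  assumes R: "ring R" and S: "ring S" and h: "h \<in> ring_hom R S" and A: "finite A" and g: "g \<in> A \<rightarrow> carrier R"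
  shows "h (finsum R g A) = finsum S (\<lambda>x. h (g x)) A"
  using A g
proof (induction A rule: finite_induct)
  case empty
  interpret R: ring R by fact
  interpret S: ring S by fact
  show ?case using ring_hom_zero[OF h R S] by simp
next
  case (insert x A)
  interpret R: ring R by fact
  interpret S: ring S by fact
  have gx: "g x \<in> carrier R" and gA: "g \<in> A \<rightarrow> carrier R" using insert by auto
  have "h (finsum R g (insert x A)) = h (g x \<oplus>\<^bsub>R\<^esub> finsum R g A)"
    using insert gA gx by (simp add: R.finsum_insert)
  also have "\<dots> = h (g x) \<oplus>\<^bsub>S\<^esub> h (finsum R g A)"
    using ring_hom_add[OF h gx R.finsum_closed[OF gA]] .
  also have "\<dots> = h (g x) \<oplus>\<^bsub>S\<^esub> finsum S (\<lambda>x. h (g x)) A" using insert gA by simp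
  also have "\<dots> = finsum S (\<lambda>x. h (g x)) (insert x A)"
    using insert gA gx ring_hom_closed[OF h] by (intro S.finsum_insert[symmetric]) auto
  finally show ?case .
qed

lemma gact_add: "gact \<xi> a (x \<oplus>\<^bsub>free_alg n\<^esub> y) = gact \<xi> a x \<oplus>\<^bsub>free_alg n\<^esub> gact \<xi> a (y :: nat list \<Rightarrow> 'k::field)"
  by (auto simp: gact_def free_alg_def algebra_simps)

lemma gact_carrier: "x \<in> carrier (free_alg n) \<Longrightarrow> gact \<xi> a x \<in> carrier (free_alg n :: (nat list \<Rightarrow> 'k::field) ring)"
  using gact_iter_carrier[where q=1 and G=x and n=n and \<xi>=\<xi> and a=a] by simp

context qsetup
begin

abbreviation "QA \<equiv> (free_alg n :: (nat list \<Rightarrow> 'k) ring) Quot I"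
abbreviation "AG \<equiv> skew_alg QA (\<lambda>X. gact \<xi> a ` X) r"
abbreviation "QP \<equiv> (path_alg n r a :: (qpath \<Rightarrow> 'k) ring) Quot J"

definition piA :: "(nat \<Rightarrow> nat list \<Rightarrow> 'k) \<Rightarrow> nat \<Rightarrow> (nat list \<Rightarrow> 'k) set" where
  "piA F = (\<lambda>p. if p < r then I +>\<^bsub>free_alg n\<^esub> F p else I)"

lemma gact_I: "gact \<xi> a ` I = I"
proof
  show "gact \<xi> a ` I \<subseteq> I" by (rule G_acts)
  show "I \<subseteq> gact \<xi> a ` I"
  proof
    fix x assume x: "x \<in> I"
    have "(gact \<xi> a ^^ r) x = x"
    proof
      fix w
      have "\<xi> ^ (r * wdeg a w) = 1" using xi_r by (simp add: power_mult)
      then show "(gact \<xi> a ^^ r) x w = x w" by (simp add: gact_iter)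
    qed
    moreover have "(gact \<xi> a ^^ r) x = gact \<xi> a ((gact \<xi> a ^^ (r - 1)) x)"
      using r_pos by (metis Suc_diff_1 comp_apply funpow.simps(2))
    moreover have "(gact \<xi> a ^^ (r - 1)) x \<in> I" by (rule gact_iter_mem[OF G_acts x])
    ultimately show "x \<in> gact \<xi> a ` I" by (metis image_eqI)
  qed
qed

lemma I_carr: "I \<subseteq> carrier (free_alg n)"
  using ideal.Icarr[OF I_ideal] by blast

lemma sigma_coset:
  assumes x: "x \<in> carrier (free_alg n)"
  shows "gact \<xi> a ` (I +>\<^bsub>free_alg n\<^esub> x) = I +>\<^bsub>free_alg n\<^esub> gact \<xi> a x"
proof -
  have "gact \<xi> a ` (I +>\<^bsub>free_alg n\<^esub> x) = (\<Union>h\<in>I. {gact \<xi> a (h \<oplus>\<^bsub>free_alg n\<^esub> x)})"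
    unfolding a_r_coset_def' by auto
  also have "\<dots> = (\<Union>h\<in>I. {gact \<xi> a h \<oplus>\<^bsub>free_alg n\<^esub> gact \<xi> a x})"
    by (simp only: gact_add)
  also have "\<dots> = (\<Union>h\<in>gact \<xi> a ` I. {h \<oplus>\<^bsub>free_alg n\<^esub> gact \<xi> a x})" by auto
  also have "\<dots> = I +>\<^bsub>free_alg n\<^esub> gact \<xi> a x" unfolding a_r_coset_def' gact_I ..
  finally show ?thesis .
qed

lemma sigma_iter:
  assumes x: "x \<in> carrier (free_alg n)"
  shows "((\<lambda>X. gact \<xi> a ` X) ^^ q) (I +>\<^bsub>free_alg n\<^esub> x) = I +>\<^bsub>free_alg n\<^esub> (gact \<xi> a ^^ q) x"
proof (induction q)
  case 0 then show ?case by simp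
next
  case (Suc q)
  have "(gact \<xi> a ^^ q) x \<in> carrier (free_alg n)" by (rule gact_iter_carrier[OF x])
  then show ?case using Suc by (simp add: sigma_coset)
qed

lemma coset_carrier: "x \<in> carrier (free_alg n) \<Longrightarrow> I +>\<^bsub>free_alg n\<^esub> x \<in> carrier QA"
  by (auto simp: FactRing_def A_RCOSETS_def')

lemma QA_zero: "\<zero>\<^bsub>QA\<^esub> = I" by (simp add: FactRing_def)

lemma piA_carrier: "F \<in> carrier (RG n r a \<xi>) \<Longrightarrow> piA F \<in> carrier AG"
  by (auto simp: piA_def RG_carrier skew_alg_def coset_carrier QA_zero)

lemma piA_surj: "X \<in> carrier AG \<Longrightarrow> \<exists>F\<in>carrier (RG n r a \<xi>). piA F = X"
proof -
  assume X: "X \<in> carrier AG"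
  have ex: "\<exists>x. x \<in> carrier (free_alg n) \<and> X p = I +>\<^bsub>free_alg n\<^esub> x" if "p < r" for p
  proof -
    have "X p \<in> carrier QA" using X that by (simp add: skew_alg_def)
    then show ?thesis by (auto simp: FactRing_def A_RCOSETS_def')
  qed
  define F where "F = (\<lambda>p. if p < r then (SOME x. x \<in> carrier (free_alg n) \<and> X p = I +>\<^bsub>free_alg n\<^esub> x) else \<zero>\<^bsub>free_alg n\<^esub>)"
  have Fp: "F p \<in> carrier (free_alg n) \<and> X p = I +>\<^bsub>free_alg n\<^esub> F p" if "p < r" for p
    using someI_ex[OF ex[OF that]] that by (simp add: F_def)
  have c1: "\<forall>p<r. F p \<in> carrier (free_alg n)" using Fp by blast
  have c2: "\<forall>p\<ge>r. F p = (\<lambda>w. 0)" by (simp add: F_def free_alg_def)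
  have "F \<in> carrier (RG n r a \<xi>)" using c1 c2 by (simp add: RG_carrier)
  moreover have "piA F = X"
  proof
    fix p show "piA F p = X p"
      using Fp X by (cases "p < r") (auto simp: piA_def skew_alg_def QA_zero)
  qed
  ultimately show ?thesis by blast
qed

end

context qsetup
begin

lemma QA_ring: "ring QA" by (rule ideal.quotient_is_ring[OF I_ideal])

lemma rcosI_hom: "(\<lambda>x. I +>\<^bsub>free_alg n\<^esub> x) \<in> ring_hom (free_alg n) QA"
  using ideal.rcos_ring_hom[OF I_ideal] by simp

lemma coset_mult: "x \<in> carrier (free_alg n) \<Longrightarrow> y \<in> carrier (free_alg n) \<Longrightarrow>
   (I +>\<^bsub>free_alg n\<^esub> x) \<otimes>\<^bsub>QA\<^esub> (I +>\<^bsub>free_alg n\<^esub> y) = I +>\<^bsub>free_alg n\<^esub> (x \<otimes>\<^bsub>free_alg n\<^esub> y)"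
  using ring_hom_mult[OF rcosI_hom] by simp

lemma coset_add: "x \<in> carrier (free_alg n) \<Longrightarrow> y \<in> carrier (free_alg n) \<Longrightarrow>
   (I +>\<^bsub>free_alg n\<^esub> x) \<oplus>\<^bsub>QA\<^esub> (I +>\<^bsub>free_alg n\<^esub> y) = I +>\<^bsub>free_alg n\<^esub> (x \<oplus>\<^bsub>free_alg n\<^esub> y)"
  using ring_hom_add[OF rcosI_hom] by simp

lemma coset_zero: "I +>\<^bsub>free_alg n\<^esub> \<zero>\<^bsub>free_alg n\<^esub> = I"
proof -
  interpret R: ring "free_alg n :: (nat list \<Rightarrow> 'k) ring" by (rule ring_R)
  show ?thesis
    by (rule R.a_rcos_zero[OF I_ideal]) (simp add: additive_subgroup.zero_closed ideal.axioms(1)[OF I_ideal])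
qed

lemma piA_mult:
  assumes F: "F \<in> carrier (RG n r a \<xi>)" and G: "G \<in> carrier (RG n r a \<xi>)"
  shows "piA (F \<otimes>\<^bsub>RG n r a \<xi>\<^esub> G) = piA F \<otimes>\<^bsub>AG\<^esub> piA G"
proof
  fix p
  interpret R: ring "free_alg n :: (nat list \<Rightarrow> 'k) ring" by (rule ring_R)
  interpret Q: ring QA by (rule QA_ring)
  show "piA (F \<otimes>\<^bsub>RG n r a \<xi>\<^esub> G) p = (piA F \<otimes>\<^bsub>AG\<^esub> piA G) p"
  proof (cases "p < r")
    case False
    then show ?thesis by (simp add: piA_def RG_mult_eq QA_zero)
  next
    case True
    let ?g = "\<lambda>(q,s). F q \<otimes>\<^bsub>free_alg n\<^esub> (gact \<xi> a ^^ q) (G s)"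
    have gc: "?g \<in> Tset r p \<rightarrow> carrier (free_alg n)"
      using F G by (auto simp: Tset_def RG_carrier intro!: R.m_closed gact_iter_carrier)
    have "piA (F \<otimes>\<^bsub>RG n r a \<xi>\<^esub> G) p = I +>\<^bsub>free_alg n\<^esub> finsum (free_alg n) ?g (Tset r p)"
      using True by (simp add: piA_def RG_mult_eq)
    also have "\<dots> = finsum QA (\<lambda>x. I +>\<^bsub>free_alg n\<^esub> ?g x) (Tset r p)"
      by (rule my_hom_finsum[OF ring_R QA_ring rcosI_hom finite_Tset gc])
    also have "\<dots> = finsum QA (\<lambda>(q,s). piA F q \<otimes>\<^bsub>QA\<^esub> ((\<lambda>X. gact \<xi> a ` X) ^^ q) (piA G s)) (Tset r p)"
    proof (rule Q.finsum_cong'[symmetric])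
      show "(\<lambda>x. I +>\<^bsub>free_alg n\<^esub> ?g x) \<in> Tset r p \<rightarrow> carrier QA"
      proof (rule Pi_I)
        fix x assume "x \<in> Tset r p"
        then have "?g x \<in> carrier (free_alg n)" using gc by blast
        then show "I +>\<^bsub>free_alg n\<^esub> ?g x \<in> carrier QA" by (rule coset_carrier)
      qed
    next
      fix x assume "x \<in> Tset r p"
      then obtain q s where x: "x = (q,s)" "q < r" "s < r" by (auto simp: Tset_def)
      have Fq: "F q \<in> carrier (free_alg n)" and Gs: "G s \<in> carrier (free_alg n)"
        using F G x by (auto simp: RG_carrier)
      have "(case x of (q,s) \<Rightarrow> piA F q \<otimes>\<^bsub>QA\<^esub> ((\<lambda>X. gact \<xi> a ` X) ^^ q) (piA G s))
          = (I +>\<^bsub>free_alg n\<^esub> F q) \<otimes>\<^bsub>QA\<^esub> (I +>\<^bsub>free_alg n\<^esub> (gact \<xi> a ^^ q) (G s))"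
        using x by (simp add: piA_def sigma_iter[OF Gs])
      also have "\<dots> = I +>\<^bsub>free_alg n\<^esub> ?g x"
        using x coset_mult[OF Fq gact_iter_carrier[OF Gs]] by simp
      finally show "(case x of (q,s) \<Rightarrow> piA F q \<otimes>\<^bsub>QA\<^esub> ((\<lambda>X. gact \<xi> a ` X) ^^ q) (piA G s)) = I +>\<^bsub>free_alg n\<^esub> ?g x" .
    qed simp
    also have "\<dots> = (piA F \<otimes>\<^bsub>AG\<^esub> piA G) p"
      using True by (simp add: RG_mult_eq)
    finally show ?thesis .
  qed
qed

lemma piA_add:
  assumes F: "F \<in> carrier (RG n r a \<xi>)" and G: "G \<in> carrier (RG n r a \<xi>)"
  shows "piA (F \<oplus>\<^bsub>RG n r a \<xi>\<^esub> G) = piA F \<oplus>\<^bsub>AG\<^esub> piA G"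
proof
  fix p
  show "piA (F \<oplus>\<^bsub>RG n r a \<xi>\<^esub> G) p = (piA F \<oplus>\<^bsub>AG\<^esub> piA G) p"
  proof (cases "p < r")
    case False
    then show ?thesis by (simp add: piA_def skew_alg_def QA_zero)
  next
    case True
    have "F p \<in> carrier (free_alg n)" "G p \<in> carrier (free_alg n)" using F G True by (auto simp: RG_carrier)
    then show ?thesis using True coset_add by (simp add: piA_def skew_alg_def)
  qed
qed

lemma piA_one: "piA \<one>\<^bsub>RG n r a \<xi>\<^esub> = \<one>\<^bsub>AG\<^esub>"
proof
  fix p
  show "piA \<one>\<^bsub>RG n r a \<xi>\<^esub> p = \<one>\<^bsub>AG\<^esub> p"
    using r_pos coset_zero by (auto simp: piA_def skew_alg_def FactRing_def)
qed

lemma minus_plus_cancel: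
  assumes "ring S" "x \<in> carrier S" "y \<in> carrier S"
  shows "(x \<ominus>\<^bsub>S\<^esub> y) \<oplus>\<^bsub>S\<^esub> y = x" and "(x \<oplus>\<^bsub>S\<^esub> y) \<ominus>\<^bsub>S\<^esub> y = x"
proof -
  interpret S: ring S by fact
  show "(x \<ominus>\<^bsub>S\<^esub> y) \<oplus>\<^bsub>S\<^esub> y = x" using assms(2,3)
    by (simp add: a_minus_def S.add.m_assoc S.l_neg)
  show "(x \<oplus>\<^bsub>S\<^esub> y) \<ominus>\<^bsub>S\<^esub> y = x" using assms(2,3)
    by (simp add: a_minus_def S.add.m_assoc S.r_neg)
qed

lemma key_equiv:
  assumes F: "F \<in> carrier (RG n r a \<xi>)" and G: "G \<in> carrier (RG n r a \<xi>)"
  shows "piA F = piA G \<longleftrightarrow> J +>\<^bsub>path_alg n r a\<^esub> Psi n r a \<xi> F = J +>\<^bsub>path_alg n r a\<^esub> Psi n r a \<xi> G"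
proof -
  interpret R: ring "free_alg n :: (nat list \<Rightarrow> 'k) ring" by (rule ring_R)
  interpret P: ring "path_alg n r a :: (qpath \<Rightarrow> 'k) ring" by (rule ring_P[OF r_pos])
  have Fp: "\<And>p. p < r \<Longrightarrow> F p \<in> carrier (free_alg n)" and Gp: "\<And>p. p < r \<Longrightarrow> G p \<in> carrier (free_alg n)"
    using F G by (auto simp: RG_carrier)
  define D where "D = (\<lambda>p. if p < r then F p \<ominus>\<^bsub>free_alg n\<^esub> G p else \<zero>\<^bsub>free_alg n\<^esub>)"
  have Dc: "D \<in> carrier (RG n r a \<xi>)"
    using Fp Gp by (auto simp: D_def RG_carrier free_alg_def[symmetric] R.minus_closed) (simp add: free_alg_def)
  have "piA F = piA G \<longleftrightarrow> (\<forall>p<r. I +>\<^bsub>free_alg n\<^esub> F p = I +>\<^bsub>free_alg n\<^esub> G p)"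
    by (auto simp: piA_def fun_eq_iff)
  also have "\<dots> \<longleftrightarrow> (\<forall>p<r. F p \<ominus>\<^bsub>free_alg n\<^esub> G p \<in> I)"
    using R.quotient_eq_iff_same_a_r_cos[OF I_ideal Fp Gp] by auto
  also have "\<dots> \<longleftrightarrow> D \<in> K" using Dc by (auto simp: Kset_def D_def)
  also have "\<dots> \<longleftrightarrow> Psi n r a \<xi> D \<in> J" using J_of_K K_of_J[OF Dc] by blast
  also have "Psi n r a \<xi> D = Psi n r a \<xi> F \<ominus>\<^bsub>path_alg n r a\<^esub> Psi n r a \<xi> G"
  proof -
    have "D \<oplus>\<^bsub>RG n r a \<xi>\<^esub> G = F"
    proof
      fix p show "(D \<oplus>\<^bsub>RG n r a \<xi>\<^esub> G) p = F p"
      proof (cases "p < r")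
        case True
        then show ?thesis using minus_plus_cancel(1)[OF ring_R Fp[OF True] Gp[OF True]]
          by (simp add: D_def skew_alg_def)
      next
        case False
        then show ?thesis using F by (simp add: D_def skew_alg_def RG_carrier free_alg_def)
      qed
    qed
    then have "Psi n r a \<xi> D \<oplus>\<^bsub>path_alg n r a\<^esub> Psi n r a \<xi> G = Psi n r a \<xi> F"
      using Psi_add'[OF r_pos xi_r prim Dc G] by simp
    then show ?thesis
      using minus_plus_cancel(2)[OF ring_P[OF r_pos] Psi_carrier[OF r_pos xi_r prim Dc] Psi_carrier[OF r_pos xi_r prim G]]
      by simp
  qed
  also have "Psi n r a \<xi> F \<ominus>\<^bsub>path_alg n r a\<^esub> Psi n r a \<xi> G \<in> J \<longleftrightarrow>
      J +>\<^bsub>path_alg n r a\<^esub> Psi n r a \<xi> F = J +>\<^bsub>path_alg n r a\<^esub> Psi n r a \<xi> G"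
    by (rule P.quotient_eq_iff_same_a_r_cos[OF J_ideal Psi_carrier[OF r_pos xi_r prim F] Psi_carrier[OF r_pos xi_r prim G]])
  finally show ?thesis .
qed

end

context qsetup
begin

definition Phi :: "(nat \<Rightarrow> (nat list \<Rightarrow> 'k) set) \<Rightarrow> (qpath \<Rightarrow> 'k) set" where
  "Phi X = J +>\<^bsub>path_alg n r a\<^esub> Psi n r a \<xi> (SOME F. F \<in> carrier (RG n r a \<xi>) \<and> piA F = X)"

lemma Phi_pi:
  assumes F: "F \<in> carrier (RG n r a \<xi>)"
  shows "Phi (piA F) = J +>\<^bsub>path_alg n r a\<^esub> Psi n r a \<xi> F"
proof -
  let ?F = "SOME G. G \<in> carrier (RG n r a \<xi>) \<and> piA G = piA F"
  have "?F \<in> carrier (RG n r a \<xi>) \<and> piA ?F = piA F"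
    by (rule someI[of _ F]) (use F in simp)
  then show ?thesis unfolding Phi_def using key_equiv[OF _ F] by blast
qed

lemma RG_add_closed:
  assumes F: "F \<in> carrier (RG n r a \<xi>)" and G: "G \<in> carrier (RG n r a \<xi>)"
  shows "F \<oplus>\<^bsub>RG n r a \<xi>\<^esub> G \<in> carrier (RG n r a \<xi>)"
proof -
  interpret R: ring "free_alg n :: (nat list \<Rightarrow> 'k) ring" by (rule ring_R)
  show ?thesis using F G by (auto simp: skew_alg_def)
qed

lemma RG_one_closed: "\<one>\<^bsub>RG n r a \<xi>\<^esub> \<in> carrier (RG n r a \<xi>)"
proof -
  interpret R: ring "free_alg n :: (nat list \<Rightarrow> 'k) ring" by (rule ring_R)
  show ?thesis using r_pos by (auto simp: skew_alg_def)
qed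

lemma J_coset_carrier: "y \<in> carrier (path_alg n r a) \<Longrightarrow> J +>\<^bsub>path_alg n r a\<^esub> y \<in> carrier QP"
  by (auto simp: FactRing_def A_RCOSETS_def')

lemma rcosJ_hom: "(\<lambda>y. J +>\<^bsub>path_alg n r a\<^esub> y) \<in> ring_hom (path_alg n r a) QP"
  using ideal.rcos_ring_hom[OF J_ideal] by simp

lemma Phi_iso: "Phi \<in> ring_iso AG QP"
proof (rule ring_iso_memI)
  fix X assume "X \<in> carrier AG"
  then obtain F where F: "F \<in> carrier (RG n r a \<xi>)" "piA F = X" using piA_surj by blast
  show "Phi X \<in> carrier QP"
    using F Phi_pi J_coset_carrier Psi_carrier[OF r_pos xi_r prim] by auto
next
  fix X Y assume "X \<in> carrier AG" "Y \<in> carrier AG"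
  then obtain F G where F: "F \<in> carrier (RG n r a \<xi>)" "piA F = X"
    and G: "G \<in> carrier (RG n r a \<xi>)" "piA G = Y" using piA_surj by meson
  have "X \<otimes>\<^bsub>AG\<^esub> Y = piA (F \<otimes>\<^bsub>RG n r a \<xi>\<^esub> G)" using piA_mult[OF F(1) G(1)] F G by simp
  then have "Phi (X \<otimes>\<^bsub>AG\<^esub> Y) = J +>\<^bsub>path_alg n r a\<^esub> (Psi n r a \<xi> F \<otimes>\<^bsub>path_alg n r a\<^esub> Psi n r a \<xi> G)"
    using Phi_pi[OF RG_mult_closed[OF F(1) G(1)]] Psi_mult[OF r_pos xi_r prim F(1) G(1)] by simp
  also have "\<dots> = Phi X \<otimes>\<^bsub>QP\<^esub> Phi Y"
    using ring_hom_mult[OF rcosJ_hom Psi_carrier[OF r_pos xi_r prim F(1)] Psi_carrier[OF r_pos xi_r prim G(1)]]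
      Phi_pi[OF F(1)] Phi_pi[OF G(1)] F G by simp
  finally show "Phi (X \<otimes>\<^bsub>AG\<^esub> Y) = Phi X \<otimes>\<^bsub>QP\<^esub> Phi Y" .
next
  fix X Y assume "X \<in> carrier AG" "Y \<in> carrier AG"
  then obtain F G where F: "F \<in> carrier (RG n r a \<xi>)" "piA F = X"
    and G: "G \<in> carrier (RG n r a \<xi>)" "piA G = Y" using piA_surj by meson
  have "X \<oplus>\<^bsub>AG\<^esub> Y = piA (F \<oplus>\<^bsub>RG n r a \<xi>\<^esub> G)" using piA_add[OF F(1) G(1)] F G by simp
  then have "Phi (X \<oplus>\<^bsub>AG\<^esub> Y) = J +>\<^bsub>path_alg n r a\<^esub> (Psi n r a \<xi> F \<oplus>\<^bsub>path_alg n r a\<^esub> Psi n r a \<xi> G)"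
    using Phi_pi[OF RG_add_closed[OF F(1) G(1)]] Psi_add'[OF r_pos xi_r prim F(1) G(1)] by simp
  also have "\<dots> = Phi X \<oplus>\<^bsub>QP\<^esub> Phi Y"
    using ring_hom_add[OF rcosJ_hom Psi_carrier[OF r_pos xi_r prim F(1)] Psi_carrier[OF r_pos xi_r prim G(1)]]
      Phi_pi[OF F(1)] Phi_pi[OF G(1)] F G by simp
  finally show "Phi (X \<oplus>\<^bsub>AG\<^esub> Y) = Phi X \<oplus>\<^bsub>QP\<^esub> Phi Y" .
next
  have "Phi \<one>\<^bsub>AG\<^esub> = J +>\<^bsub>path_alg n r a\<^esub> Psi n r a \<xi> \<one>\<^bsub>RG n r a \<xi>\<^esub>"
    using Phi_pi[OF RG_one_closed] piA_one by simp
  also have "\<dots> = \<one>\<^bsub>QP\<^esub>" using Psi_one[OF r_pos xi_r prim] by (simp add: FactRing_def)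
  finally show "Phi \<one>\<^bsub>AG\<^esub> = \<one>\<^bsub>QP\<^esub>" .
next
  show "bij_betw Phi (carrier AG) (carrier QP)"
    unfolding bij_betw_def
  proof
    show "inj_on Phi (carrier AG)"
    proof (rule inj_onI)
      fix X Y assume "X \<in> carrier AG" "Y \<in> carrier AG" and e: "Phi X = Phi Y"
      then obtain F G where F: "F \<in> carrier (RG n r a \<xi>)" "piA F = X"
        and G: "G \<in> carrier (RG n r a \<xi>)" "piA G = Y" using piA_surj by meson
      have "J +>\<^bsub>path_alg n r a\<^esub> Psi n r a \<xi> F = J +>\<^bsub>path_alg n r a\<^esub> Psi n r a \<xi> G"
        using e Phi_pi[OF F(1)] Phi_pi[OF G(1)] F G by simp
      then show "X = Y" using key_equiv[OF F(1) G(1)] F G by simp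
    qed
    show "Phi ` carrier AG = carrier QP"
    proof
      show "Phi ` carrier AG \<subseteq> carrier QP"
      proof
        fix Z assume "Z \<in> Phi ` carrier AG"
        then obtain X where X: "X \<in> carrier AG" "Z = Phi X" by blast
        then obtain F where F: "F \<in> carrier (RG n r a \<xi>)" "piA F = X" using piA_surj by blast
        show "Z \<in> carrier QP"
          using X F Phi_pi J_coset_carrier Psi_carrier[OF r_pos xi_r prim] by auto
      qed
      show "carrier QP \<subseteq> Phi ` carrier AG"
      proof
        fix Z assume "Z \<in> carrier QP"
        then obtain y where y: "y \<in> carrier (path_alg n r a)" "Z = J +>\<^bsub>path_alg n r a\<^esub> y"
          by (auto simp: FactRing_def A_RCOSETS_def')
        obtain F where F: "F \<in> carrier (RG n r a \<xi>)" "y = Psi n r a \<xi> F"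
          using Psi_surj[OF r_pos xi_r prim y(1)] by blast
        have "Z = Phi (piA F)" using Phi_pi[OF F(1)] F y by simp
        then show "Z \<in> Phi ` carrier AG" using piA_carrier[OF F(1)] by blast
      qed
    qed
  qed
qed

lemma Phi_scalar:
  "Phi (\<lambda>p. if p = 0 then I +>\<^bsub>free_alg n\<^esub> free_scalar c else \<zero>\<^bsub>QA\<^esub>)
     = J +>\<^bsub>path_alg n r a\<^esub> path_scalar r c"
proof -
  define Sc where "Sc = (\<lambda>p::nat. if p = 0 then free_scalar c else \<zero>\<^bsub>free_alg n\<^esub>)"
  have z: "\<zero>\<^bsub>free_alg n\<^esub> = (\<lambda>w. 0::'k)" by (simp add: free_alg_def)
  have zc: "\<zero>\<^bsub>free_alg n\<^esub> \<in> carrier (free_alg n :: (nat list \<Rightarrow> 'k) ring)"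
    using ring.ring_simprules(2)[OF ring_R] by blast
  have c1: "\<forall>p<r. Sc p \<in> carrier (free_alg n)" using free_scalar_carrier[of c n] zc by (simp add: Sc_def)
  have c2: "\<forall>p\<ge>r. Sc p = (\<lambda>w. 0)" using r_pos z by (simp add: Sc_def)
  have Sc: "Sc \<in> carrier (RG n r a \<xi>)" using c1 c2 by (simp add: RG_carrier)
  have "piA Sc = (\<lambda>p. if p = 0 then I +>\<^bsub>free_alg n\<^esub> free_scalar c else \<zero>\<^bsub>QA\<^esub>)"
    using r_pos coset_zero by (auto simp: piA_def Sc_def QA_zero fun_eq_iff)
  moreover have "Psi n r a \<xi> Sc = path_scalar r c"
  proof
    fix q
    have four: "Four r \<xi> Sc w i = (if i < r \<and> w = [] then c else 0)" for w i
    proof -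
      have "(\<Sum>p<r. Sc p w * E \<xi> r (- (int i * int p))) = (\<Sum>p<r. if p = 0 then free_scalar c w else 0)"
        by (intro sum.cong refl) (auto simp: Sc_def free_alg_def E_def)
      also have "\<dots> = free_scalar c w" using r_pos by simp
      finally have S: "(\<Sum>p<r. Sc p w * E \<xi> r (- (int i * int p))) = free_scalar c w" .
      show ?thesis unfolding Four_def S by (simp add: free_scalar_def)
    qed
    show "Psi n r a \<xi> Sc q = path_scalar r c q"
    proof (cases q)
      case (Triv i) then show ?thesis by (simp add: Psi_def dec_def four path_scalar_def)
    next
      case (Arrs es)
      then show ?thesis by (auto simp: Psi_def dec_def four path_scalar_def)
    qed
  qed
  ultimately show ?thesis using Phi_pi[OF Sc] by simp
qed

end

theorem theorem5p3:
  fixes \<xi> :: "'k::field_char_0" and n r h :: nat and a :: "nat \<Rightarrow> nat"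
    and f :: "nat \<Rightarrow> nat list \<Rightarrow> 'k"
  assumes alg_closed: "\<forall>p :: 'k poly. degree p > 0 \<longrightarrow> (\<exists>x. poly p x = 0)"
    and r_pos: "r \<ge> 1"
    and prim: "\<xi> ^ r = 1" "\<forall>p. 0 < p \<and> p < r \<longrightarrow> \<xi> ^ p \<noteq> 1"
    and a_range: "\<forall>j\<in>{1..n}. 0 < a j \<and> a j \<le> r"
    and g_order: "\<forall>p. 0 < p \<and> p < r \<longrightarrow> (\<exists>j\<in>{1..n}. \<xi> ^ (p * a j) \<noteq> 1)"
    and f_in: "\<forall>j\<in>{1..h}. f j \<in> carrier (free_alg n)"
    and f_graded: "\<forall>j\<in>{1..h}. homogeneous_pos (f j)"
    and noeth: "noetherian_nc (free_alg n Quot rel_ideal n f h)"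
    and G_acts: "gact \<xi> a ` rel_ideal n f h \<subseteq> rel_ideal n f h"
  shows "\<exists>\<Phi>. \<Phi> \<in> ring_iso
             (skew_alg (free_alg n Quot rel_ideal n f h) (\<lambda>X. gact \<xi> a ` X) r)
             (path_alg n r a Quot quiver_ideal n r a f h)
           \<and> (\<forall>c::'k. \<Phi> (\<lambda>p. if p = 0 then rel_ideal n f h +>\<^bsub>free_alg n\<^esub> free_scalar c
                                else \<zero>\<^bsub>free_alg n Quot rel_ideal n f h\<^esub>)
                     = quiver_ideal n r a f h +>\<^bsub>path_alg n r a\<^esub> path_scalar r c)"
proof -
  have r: "0 < r" using r_pos by simp
  interpret S: qsetup n r h a \<xi> f
    by unfold_locales (use r prim f_in G_acts in auto)
  show ?thesis using S.Phi_iso S.Phi_scalar by blast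
qed

end
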